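(* A formal series $\tilde\varphi\in\mathbb{C}[[z^{-1}]]$ is resurgent if and only if there exists a discrete filtered set $\Omega$ such that $\tilde\varphi$ is $\Omega$-resurgent. In other words, $$\hat{\mathscr{R}}=\bigcup_{\Omega\ \text{d.f.s.}}\hat{\mathscr{R}}_\Omega,\qquad \tilde{\mathscr{R}}=\bigcup_{\Omega\ \text{d.f.s.}}\tilde{\mathscr{R}}_\Omega .$$
   Context: A convergent power series $\hat\varphi\in\mathbb{C}\{\zeta\}$ is endlessly continuable if for every $L>0$ there is a finite $F_L\subset\mathbb{C}$ such that $\hat\varphi$ can be analytically continued along every Lipschitz path $\gamma:[0,1]\to\mathbb{C}$ of length $<L$ with $\gamma(0)=0$ and $\gamma((0,1])\subset\mathbb{C}\setminus F_L$; $\hat{\mathscr{R}}$ denotes the space of such functions. The formal Borel transform $\mathcal{B}:\mathbb{C}[[z^{-1}]]\to\mathbb{C}\delta\oplus\mathbb{C}[[\zeta]]$ sends $\sum_{j\ge0}\varphi_jz^{-j}$ to $\varphi_0\delta+\sum_{j\ge1}\varphi_j\zeta^{j-1}/(j-1)!$; $\tilde{\mathscr{R}}=\mathcal{B}^{-1}(\mathbb{C}\delta\oplus\hat{\mathscr{R}})$ is the space of resurgent series. A discrete filtered set (d.f.s.) is a family $\Omega=(\Omega_L)_{L\ge0}$ of finite subsets of $\mathbb{C}$ with $\Omega_{L_1}\subseteq\Omega_{L_2}$ for $L_1\le L_2$ and $\Omega_\delta=\emptyset$ for some $\delta>0$. Let $\mathcal{S}_\Omega=\{(\lambda,\omega)\in\mathbb{R}\times\mathbb{C}\mid\lambda\ge0,\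 \omega\in\Omega_\lambda\}$ and $\mathcal{M}_\Omega=(\mathbb{R}\times\mathbb{C})\setminus\overline{\mathcal{S}_\Omega}$. Let $\Pi$ be the set of Lipschitz paths $\gamma:[0,t_*]\to\mathbb{C}$ ($t_*\ge0$) with $\gamma(0)=0$; for $t\in[0,t_*]$, $\gamma_{|t}$ denotes the restriction to $[0,t]$ and $L(\cdot)$ denotes length. A path $\gamma\in\Pi$ is $\Omega$-allowed if $(L(\gamma_{|t}),\gamma(t))\in\mathcal{M}_\Omega$ for all $t$. A germ $\hat\varphi\in\mathbb{C}\{\zeta\}$ is $\Omega$-continuable if it can be analytically continued along every $\Omega$-allowed path; $\hat{\mathscr{R}}_\Omega$ is the set of such germs, and $\tilde{\mathscr{R}}_\Omega=\mathcal{B}^{-1}(\mathbb{C}\delta\oplus\hat{\mathscr{R}}_\Omega)$ is the set of $\Omega$-resurgent series. *)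

theory Defs
  imports "HOL-Analysis.Analysis"
begin

(* Convergent power series (germ at 0) are represented by their coefficient
   sequences a :: nat => complex with positive radius of convergence. *)

definition conv_germ :: "(nat \<Rightarrow> complex) \<Rightarrow> bool" where
  "conv_germ a \<longleftrightarrow> conv_radius a > 0"

definition path_len :: "(real \<Rightarrow> complex) \<Rightarrow> real \<Rightarrow> real \<Rightarrow> real" where
  "path_len \<gamma> a b =
     Sup ((\<lambda>ps. \<Sum>i<length ps - 1. norm (\<gamma> (ps ! Suc i) - \<gamma> (ps ! i)))
          ` {ps. sorted ps \<and> set ps \<subseteq> {a..b}})"

definition lipschitz_path :: "(real \<Rightarrow> complex) \<Rightarrow> real \<Rightarrow> bool" where
  "lipschitz_path \<gamma> T \<longleftrightarrow> (\<exists>C. C-lipschitz_on {0..T} \<gamma>)"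

definition cont_along :: "(nat \<Rightarrow> complex) \<Rightarrow> (real \<Rightarrow> complex) \<Rightarrow> real \<Rightarrow> bool" where
  "cont_along a \<gamma> T \<longleftrightarrow>
     (\<exists>(f :: real \<Rightarrow> complex \<Rightarrow> complex) (r :: real \<Rightarrow> real).
        (\<forall>t\<in>{0..T}. r t > 0 \<and> f t holomorphic_on ball (\<gamma> t) (r t)) \<and>
        (\<forall>t\<in>{0..T}. \<exists>e>0. \<forall>s\<in>{0..T}. \<bar>s - t\<bar> < e \<longrightarrow>
            \<gamma> s \<in> ball (\<gamma> t) (r t) \<and>
            (\<forall>z \<in> ball (\<gamma> s) (r s) \<inter> ball (\<gamma> t) (r t). f s z = f t z)) \<and>
        (\<exists>e>0. \<forall>z\<in>ball 0 e. f 0 z = (\<Sum>n. a n * z ^ n)))"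

definition endlessly_continuable :: "(nat \<Rightarrow> complex) \<Rightarrow> bool" where
  "endlessly_continuable a \<longleftrightarrow> conv_germ a \<and>
     (\<forall>L>0. \<exists>F :: complex set. finite F \<and>
        (\<forall>\<gamma>. lipschitz_path \<gamma> 1 \<and> \<gamma> 0 = 0 \<and> path_len \<gamma> 0 1 < L \<and>
              \<gamma> ` {0<..1} \<subseteq> - F \<longrightarrow> cont_along a \<gamma> 1))"

definition dfs :: "(real \<Rightarrow> complex set) \<Rightarrow> bool" where
  "dfs \<Omega> \<longleftrightarrow> (\<forall>L\<ge>0. finite (\<Omega> L)) \<and>
     (\<forall>L1 L2. 0 \<le> L1 \<and> L1 \<le> L2 \<longrightarrow> \<Omega> L1 \<subseteq> \<Omega> L2) \<and>
     (\<exists>\<delta>>0. \<Omega> \<delta> = {})"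

definition S_dfs :: "(real \<Rightarrow> complex set) \<Rightarrow> (real \<times> complex) set" where
  "S_dfs \<Omega> = {(l, w). l \<ge> 0 \<and> w \<in> \<Omega> l}"

definition M_dfs :: "(real \<Rightarrow> complex set) \<Rightarrow> (real \<times> complex) set" where
  "M_dfs \<Omega> = UNIV - closure (S_dfs \<Omega>)"

definition allowed :: "(real \<Rightarrow> complex set) \<Rightarrow> (real \<Rightarrow> complex) \<Rightarrow> real \<Rightarrow> bool" where
  "allowed \<Omega> \<gamma> T \<longleftrightarrow> T \<ge> 0 \<and> lipschitz_path \<gamma> T \<and> \<gamma> 0 = 0 \<and>
     (\<forall>t\<in>{0..T}. (path_len \<gamma> 0 t, \<gamma> t) \<in> M_dfs \<Omega>)"

definition omega_continuable :: "(real \<Rightarrow> complex set) \<Rightarrow> (nat \<Rightarrow> complex) \<Rightarrow> bool" where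
  "omega_continuable \<Omega> a \<longleftrightarrow> conv_germ a \<and>
     (\<forall>\<gamma> T. allowed \<Omega> \<gamma> T \<longrightarrow> cont_along a \<gamma> T)"

(* Formal series \<Sum>_j \<phi> j z^{-j} as coefficient sequences; Borel transform of the
   non-constant part: \<zeta>^n coefficient \<phi>(n+1)/n!  (the \<delta>-part is unconstrained). *)
definition borel :: "(nat \<Rightarrow> complex) \<Rightarrow> (nat \<Rightarrow> complex)" where
  "borel \<phi> = (\<lambda>n. \<phi> (Suc n) / of_nat (fact n))"

definition resurgent :: "(nat \<Rightarrow> complex) \<Rightarrow> bool" where
  "resurgent \<phi> \<longleftrightarrow> endlessly_continuable (borel \<phi>)"

definition omega_resurgent :: "(real \<Rightarrow> complex set) \<Rightarrow> (nat \<Rightarrow> complex) \<Rightarrow> bool" where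
  "omega_resurgent \<Omega> \<phi> \<longleftrightarrow> omega_continuable \<Omega> (borel \<phi>)"

end

theory Submission
  imports Defs "HOL-Complex_Analysis.Complex_Analysis"
begin

definition sfam :: "(real \<Rightarrow> complex) \<Rightarrow> real \<Rightarrow> real \<Rightarrow> (real \<Rightarrow> complex \<Rightarrow> complex) \<Rightarrow> (real \<Rightarrow> real) \<Rightarrow> bool" where
 "sfam \<gamma> A B f r \<longleftrightarrow>
 (\<forall>t\<in>{A..B}. r t > 0 \<and> f t holomorphic_on ball (\<gamma> t) (r t)) \<and>
 (\<forall>t\<in>{A..B}. \<exists>e>0. \<forall>s\<in>{A..B}. \<bar>s - t\<bar> < e \<longrightarrow> \<gamma> s \<in> ball (\<gamma> t) (r t) \<and>
     (\<forall>z \<in> ball (\<gamma> s) (r s) \<inter> ball (\<gamma> t) (r t). f s z = f t z))"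

definition psum :: "(nat \<Rightarrow> complex) \<Rightarrow> complex \<Rightarrow> complex" where
 "psum a z = (\<Sum>n. a n * z ^ n)"

definition cfam where
 "cfam a \<gamma> T f r \<longleftrightarrow> sfam \<gamma> 0 T f r \<and> (\<exists>e>0. \<forall>z\<in>ball 0 e. f 0 z = psum a z)"

lemma cont_along_cfam: "cont_along a \<gamma> T \<longleftrightarrow> (\<exists>f r. cfam a \<gamma> T f r)"
  unfolding cont_along_def cfam_def sfam_def psum_def by blast

lemma ident:
  assumes "h1 holomorphic_on V" "h2 holomorphic_on V" "open V" "connected V" "open W" "W \<noteq> {}"
    "W \<subseteq> V" "\<And>z. z\<in>W \<Longrightarrow> h1 z = h2 z" "z \<in> V"
  shows "h1 z = h2 z"
  using analytic_continuation_open[of W V h1 h2 z] assms by auto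

lemma ident_balls:
  assumes "h1 holomorphic_on V" "h2 holomorphic_on V" "V = ball c1 r1 \<inter> ball c2 r2"
    "open W" "W \<noteq> {}" "W \<subseteq> V" "\<And>z. z\<in>W \<Longrightarrow> h1 z = h2 z" "z \<in> V"
  shows "h1 z = h2 z"
proof -
  have "convex V" using assms(3) by (simp add: convex_Int)
  then have "connected V" by (simp add: convex_connected)
  then show ?thesis using ident[OF assms(1,2) _ _ assms(4-8)] assms(3) by auto
qed

lemma ident_ball:
  assumes "h1 holomorphic_on ball c r" "h2 holomorphic_on ball c r"
    "open W" "W \<noteq> {}" "W \<subseteq> ball c r" "\<And>z. z\<in>W \<Longrightarrow> h1 z = h2 z" "z \<in> ball c r"
  shows "h1 z = h2 z"
  using ident[OF assms(1,2) _ _ assms(3-7)] by auto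

lemma powser_holo:
  assumes "ereal \<rho> \<le> conv_radius a"
  shows "psum a holomorphic_on ball 0 \<rho>"
  unfolding psum_def
proof (subst holomorphic_on_open[OF open_ball], safe)
  fix x :: complex assume "x \<in> ball 0 \<rho>"
  then have "ereal (norm x) < conv_radius a" using assms
    by (metis dist_0_norm ereal_less(3) less_ereal.simps(1) mem_ball order_less_le_trans)
  then show "\<exists>f'. ((\<lambda>z. \<Sum>n. a n * z ^ n) has_field_derivative f') (at x)"
    using has_field_derivative_powser by blast
qed

lemma conv_germ_rho:
  assumes "conv_germ a"
  obtains \<rho> where "\<rho> > 0" "ereal \<rho> \<le> conv_radius a"
proof -
  from assms have "0 < conv_radius a" by (simp add: conv_germ_def)
  then obtain z where "0 < ereal z" "ereal z < conv_radius a" using ereal_dense2 by blast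
  then show ?thesis using that[of z] by auto
qed

lemma cont_along_global:
  assumes cont: "continuous_on {0..T} \<gamma>" and g0: "\<gamma> 0 = 0" and hol: "S holomorphic_on U"
    and U: "open U" "\<gamma> ` {0..T} \<subseteq> U" and e: "e > 0" "\<forall>z\<in>ball 0 e. S z = psum a z"
  shows "cont_along a \<gamma> T"
proof -
  have "\<forall>t\<in>{0..T}. \<exists>\<rho>>0. ball (\<gamma> t) \<rho> \<subseteq> U"
    using U open_contains_ball by blast
  then obtain r where r: "\<forall>t\<in>{0..T}. r t > 0 \<and> ball (\<gamma> t) (r t) \<subseteq> U"
    by metis
  have h1: "\<forall>t\<in>{0..T}. 0 < r t \<and> S holomorphic_on ball (\<gamma> t) (r t)"
      using r hol holomorphic_on_subset by blast
  have h2: "\<exists>e>0. \<forall>s\<in>{0..T}. \<bar>s - t\<bar> < e \<longrightarrow> \<gamma> s \<in> ball (\<gamma> t) (r t) \<and>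
       (\<forall>z\<in>ball (\<gamma> s) (r s) \<inter> ball (\<gamma> t) (r t). S z = S z)" if t: "t \<in> {0..T}" for t
  proof -
    obtain d where d: "d > 0" "\<forall>s\<in>{0..T}. dist s t < d \<longrightarrow> dist (\<gamma> s) (\<gamma> t) < r t"
      using cont t r unfolding continuous_on_iff by metis
    show ?thesis
    proof (intro exI[of _ d] conjI ballI impI)
      fix s assume "s \<in> {0..T}" "\<bar>s - t\<bar> < d"
      then show "\<gamma> s \<in> ball (\<gamma> t) (r t)" using d by (simp add: dist_real_def dist_commute)
    qed (use d in auto)
  qed
  have "cfam a \<gamma> T (\<lambda>_. S) r"
    unfolding cfam_def sfam_def using h1 h2 e by blast
  then show ?thesis using cont_along_cfam by blast
qed

lemma cont_along_zero:
  assumes "conv_germ a" "\<gamma> 0 = 0"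
  shows "cont_along a \<gamma> 0"
proof -
  obtain \<rho> where \<rho>: "\<rho> > 0" "ereal \<rho> \<le> conv_radius a" using conv_germ_rho assms by blast
  show ?thesis
    by (rule cont_along_global[of 0 \<gamma> "psum a" "ball 0 \<rho>" \<rho>])
       (use \<rho> assms powser_holo in auto)
qed

lemma cfam_restrict:
  assumes "cfam a \<gamma> T f r" "T' \<le> T"
  shows "cfam a \<gamma> T' f r"
  using assms unfolding cfam_def sfam_def
  apply (intro conjI)
    apply (meson atLeastAtMost_iff order_trans)
  apply (metis atLeastAtMost_iff order_trans)
  by blast

lemma cont_along_restrict:
  assumes "cont_along a \<gamma> T" "T' \<le> T"
  shows "cont_along a \<gamma> T'"
  using assms cfam_restrict cont_along_cfam by metis

lemma holo_min1: "f holomorphic_on ball c r \<Longrightarrow> f holomorphic_on ball c (min r q)"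
  by (rule holomorphic_on_subset) auto
lemma holo_min2: "f holomorphic_on ball c q \<Longrightarrow> f holomorphic_on ball c (min r q)"
  by (rule holomorphic_on_subset) auto

lemma sfam_global:
  assumes cont: "continuous_on {A..B} \<gamma>" and hol: "S holomorphic_on U"
    and U: "open U" "\<gamma> ` {A..B} \<subseteq> U"
  shows "\<exists>r. sfam \<gamma> A B (\<lambda>_. S) r"
proof -
  have "\<forall>t\<in>{A..B}. \<exists>\<rho>>0. ball (\<gamma> t) \<rho> \<subseteq> U"
    using U open_contains_ball by blast
  then obtain r where r: "\<forall>t\<in>{A..B}. r t > 0 \<and> ball (\<gamma> t) (r t) \<subseteq> U"
    by metis
  have h1: "\<forall>t\<in>{A..B}. 0 < r t \<and> S holomorphic_on ball (\<gamma> t) (r t)"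
      using r hol holomorphic_on_subset by blast
  have h2: "\<exists>e>0. \<forall>s\<in>{A..B}. \<bar>s - t\<bar> < e \<longrightarrow> \<gamma> s \<in> ball (\<gamma> t) (r t) \<and>
       (\<forall>z\<in>ball (\<gamma> s) (r s) \<inter> ball (\<gamma> t) (r t). S z = S z)" if t: "t \<in> {A..B}" for t
  proof -
    obtain d where d: "d > 0" "\<forall>s\<in>{A..B}. dist s t < d \<longrightarrow> dist (\<gamma> s) (\<gamma> t) < r t"
      using cont t r unfolding continuous_on_iff by metis
    show ?thesis
    proof (intro exI[of _ d] conjI ballI impI)
      fix s assume "s \<in> {A..B}" "\<bar>s - t\<bar> < d"
      then show "\<gamma> s \<in> ball (\<gamma> t) (r t)" using d by (simp add: dist_real_def dist_commute)
    qed (use d in auto)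
  qed
  have "sfam \<gamma> A B (\<lambda>_. S) r"
    unfolding sfam_def using h1 h2 by blast
  then show ?thesis by blast
qed

lemma sfam_unique:
  assumes f: "sfam \<gamma> 0 T f r" and g: "sfam \<gamma> 0 T g q" and T: "0 \<le> T"
   and e0: "e > 0" "\<forall>z\<in>ball (\<gamma> 0) e. f 0 z = g 0 z"
   and t: "t \<in> {0..T}" and z: "z \<in> ball (\<gamma> t) (min (r t) (q t))"
  shows "f t z = g t z"
proof -
  define P where "P t \<longleftrightarrow> (\<forall>z\<in>ball (\<gamma> t) (min (r t) (q t)). f t z = g t z)" for t
  have fr: "\<forall>t\<in>{0..T}. r t > 0 \<and> f t holomorphic_on ball (\<gamma> t) (r t)"
   and fl: "\<forall>t\<in>{0..T}. \<exists>e>0. \<forall>s\<in>{0..T}. \<bar>s - t\<bar> < e \<longrightarrow> \<gamma> s \<in> ball (\<gamma> t) (r t) \<and>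
     (\<forall>z \<in> ball (\<gamma> s) (r s) \<inter> ball (\<gamma> t) (r t). f s z = f t z)"
    using f unfolding sfam_def by blast+
  have gr: "\<forall>t\<in>{0..T}. q t > 0 \<and> g t holomorphic_on ball (\<gamma> t) (q t)"
   and gl: "\<forall>t\<in>{0..T}. \<exists>e>0. \<forall>s\<in>{0..T}. \<bar>s - t\<bar> < e \<longrightarrow> \<gamma> s \<in> ball (\<gamma> t) (q t) \<and>
     (\<forall>z \<in> ball (\<gamma> s) (q s) \<inter> ball (\<gamma> t) (q t). g s z = g t z)"
    using g unfolding sfam_def by blast+
  have hf: "f t holomorphic_on ball (\<gamma> t) (min (r t) (q t))" if "t \<in> {0..T}" for t
    using fr that holo_min1 by blast
  have hg: "g t holomorphic_on ball (\<gamma> t) (min (r t) (q t))" if "t \<in> {0..T}" for t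
    using gr that holo_min2 by blast
  have loc: "P s \<longleftrightarrow> P t" if t: "t \<in> {0..T}" and s: "s \<in> {0..T}" "\<bar>s - t\<bar> < e" 
    and e: "\<forall>s\<in>{0..T}. \<bar>s - t\<bar> < e \<longrightarrow> \<gamma> s \<in> ball (\<gamma> t) (r t) \<and>
     (\<forall>z \<in> ball (\<gamma> s) (r s) \<inter> ball (\<gamma> t) (r t). f s z = f t z)"
    and e': "\<forall>s\<in>{0..T}. \<bar>s - t\<bar> < e \<longrightarrow> \<gamma> s \<in> ball (\<gamma> t) (q t) \<and>
     (\<forall>z \<in> ball (\<gamma> s) (q s) \<inter> ball (\<gamma> t) (q t). g s z = g t z)"
    for s t e
  proof -
    define W where "W = ball (\<gamma> s) (min (r s) (q s)) \<inter> ball (\<gamma> t) (min (r t) (q t))"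
    have "\<gamma> s \<in> W" using e e' s t fr gr by (auto simp: W_def)
    then have Wne: "W \<noteq> {}" by auto
    have Wo: "open W" by (simp add: W_def open_Int)
    have fW: "\<forall>z\<in>W. f s z = f t z" using e s by (auto simp: W_def)
    have gW: "\<forall>z\<in>W. g s z = g t z" using e' s by (auto simp: W_def)
    show ?thesis
    proof
      assume "P s"
      then have "\<forall>z\<in>W. f t z = g t z" using fW gW by (auto simp: P_def W_def)
      then show "P t" unfolding P_def
        using ident_ball[OF hf[OF t] hg[OF t] Wo Wne] by (auto simp: W_def)
    next
      assume "P t"
      then have "\<forall>z\<in>W. f s z = g s z" using fW gW by (auto simp: P_def W_def)
      then show "P s" unfolding P_def
        using ident_ball[OF hf[OF s(1)] hg[OF s(1)] Wo Wne] by (auto simp: W_def)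
    qed
  qed
  have P0: "P 0"
  proof -
    define W where "W = ball (\<gamma> 0) (min e (min (r 0) (q 0)))"
    have "0 \<in> {0..T}" using T by auto
    then have pos: "min e (min (r 0) (q 0)) > 0" using fr gr e0 by (auto simp: min_le_iff_disj not_le)
    have "\<forall>z\<in>W. f 0 z = g 0 z" using e0 by (auto simp: W_def)
    moreover have sub: "W \<subseteq> ball (\<gamma> 0) (min (r 0) (q 0))" by (auto simp: W_def)
    moreover have ne: "W \<noteq> {}" using pos unfolding W_def by (metis centre_in_ball empty_iff)
    moreover have "open W" by (simp add: W_def)
    ultimately show ?thesis unfolding P_def
      using ident_ball[OF hf[OF \<open>0 \<in> {0..T}\<close>] hg[OF \<open>0 \<in> {0..T}\<close>]] by blast
  qed
  have "P t"
  proof (rule connected_induction_simple[of "{0..T}" 0 t P])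
    show "connected {0..T::real}" by simp
    show "0 \<in> {0..T}" using T by simp
    show "t \<in> {0..T}" using t .
    show "P 0" using P0 .
    fix a assume a: "a \<in> {0..T}"
    obtain e1 where e1: "e1 > 0" "\<forall>s\<in>{0..T}. \<bar>s - a\<bar> < e1 \<longrightarrow> \<gamma> s \<in> ball (\<gamma> a) (r a) \<and>
     (\<forall>z \<in> ball (\<gamma> s) (r s) \<inter> ball (\<gamma> a) (r a). f s z = f a z)" using fl a by blast
    obtain e2 where e2: "e2 > 0" "\<forall>s\<in>{0..T}. \<bar>s - a\<bar> < e2 \<longrightarrow> \<gamma> s \<in> ball (\<gamma> a) (q a) \<and>
     (\<forall>z \<in> ball (\<gamma> s) (q s) \<inter> ball (\<gamma> a) (q a). g s z = g a z)" using gl a by blast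
    define E where "E = min e1 e2"
    have E1: "\<forall>s\<in>{0..T}. \<bar>s - a\<bar> < E \<longrightarrow> \<gamma> s \<in> ball (\<gamma> a) (r a) \<and>
     (\<forall>z \<in> ball (\<gamma> s) (r s) \<inter> ball (\<gamma> a) (r a). f s z = f a z)" using e1 by (auto simp: E_def)
    have E2: "\<forall>s\<in>{0..T}. \<bar>s - a\<bar> < E \<longrightarrow> \<gamma> s \<in> ball (\<gamma> a) (q a) \<and>
     (\<forall>z \<in> ball (\<gamma> s) (q s) \<inter> ball (\<gamma> a) (q a). g s z = g a z)" using e2 by (auto simp: E_def)
    show "\<exists>U. openin (top_of_set {0..T}) U \<and> a \<in> U \<and> (\<forall>x\<in>U. \<forall>y\<in>U. P x \<longrightarrow> P y)"
    proof (intro exI conjI)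
      show "openin (top_of_set {0..T}) ({0..T} \<inter> ball a E)"
        by (simp add: openin_open_Int)
      show "a \<in> {0..T} \<inter> ball a E" using a e1 e2 by (simp add: E_def)
      show "\<forall>x\<in>{0..T} \<inter> ball a E. \<forall>y\<in>{0..T} \<inter> ball a E. P x \<longrightarrow> P y"
        using loc[OF a _ _ E1 E2] by (auto simp: dist_real_def abs_minus_commute)
    qed
  qed
  then show ?thesis using z by (simp add: P_def)
qed

lemma sfam_glue:
  assumes f: "sfam \<gamma> 0 T2 f r" and h: "sfam \<gamma> T2 T h q" and T2: "0 \<le> T2" "T2 \<le> T"
    and cont: "continuous_on {0..T} \<gamma>"
    and eta: "\<eta> > 0" "\<forall>z\<in>ball (\<gamma> T2) \<eta>. f T2 z = h T2 z"
  shows "sfam \<gamma> 0 T (\<lambda>t. if t \<le> T2 then f t else h t)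
           (\<lambda>t. if t < T2 then r t else if t = T2 then min (r T2) (q T2) else q t)"
proof -
  define F where "F = (\<lambda>t. if t \<le> T2 then f t else h t)"
  define R where "R = (\<lambda>t. if t < T2 then r t else if t = T2 then min (r T2) (q T2) else q t)"
  have fr: "\<forall>t\<in>{0..T2}. r t > 0 \<and> f t holomorphic_on ball (\<gamma> t) (r t)"
   and fl: "\<forall>t\<in>{0..T2}. \<exists>e>0. \<forall>s\<in>{0..T2}. \<bar>s - t\<bar> < e \<longrightarrow> \<gamma> s \<in> ball (\<gamma> t) (r t) \<and>
     (\<forall>z \<in> ball (\<gamma> s) (r s) \<inter> ball (\<gamma> t) (r t). f s z = f t z)"
    using f unfolding sfam_def by blast+
  have hr: "\<forall>t\<in>{T2..T}. q t > 0 \<and> h t holomorphic_on ball (\<gamma> t) (q t)"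
   and hl: "\<forall>t\<in>{T2..T}. \<exists>e>0. \<forall>s\<in>{T2..T}. \<bar>s - t\<bar> < e \<longrightarrow> \<gamma> s \<in> ball (\<gamma> t) (q t) \<and>
     (\<forall>z \<in> ball (\<gamma> s) (q s) \<inter> ball (\<gamma> t) (q t). h s z = h t z)"
    using h unfolding sfam_def by blast+
  define m where "m = min (r T2) (q T2)"
  have mpos: "m > 0" using fr hr T2 by (auto simp: m_def)
  have fh: "f T2 z = h T2 z" if z: "z \<in> ball (\<gamma> T2) m" for z
  proof -
    have 1: "f T2 holomorphic_on ball (\<gamma> T2) m" using fr T2 holo_min1 unfolding m_def by auto
    have 2: "h T2 holomorphic_on ball (\<gamma> T2) m" using hr T2 holo_min2 unfolding m_def by auto
    have 3: "ball (\<gamma> T2) (min \<eta> m) \<subseteq> ball (\<gamma> T2) m" by auto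
    have 4: "ball (\<gamma> T2) (min \<eta> m) \<noteq> {}" using eta mpos by auto
    show ?thesis using ident_ball[OF 1 2 _ 4 3] eta z by auto
  qed
  have A: "\<forall>t\<in>{0..T}. R t > 0 \<and> F t holomorphic_on ball (\<gamma> t) (R t)"
  proof
    fix t assume t: "t \<in> {0..T}"
    show "R t > 0 \<and> F t holomorphic_on ball (\<gamma> t) (R t)"
    proof (cases "t < T2")
      case True then show ?thesis using fr t by (auto simp: F_def R_def)
    next
      case False
      show ?thesis
      proof (cases "t = T2")
        case True then show ?thesis using fr hr T2 mpos
          using holo_min1[of "f T2" "\<gamma> T2" "r T2" "q T2"] by (auto simp: F_def R_def)
      next
        case False
        then show ?thesis using hr t \<open>\<not> t < T2\<close> by (auto simp: F_def R_def)
      qed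
    qed
  qed
  have B: "\<exists>e>0. \<forall>s\<in>{0..T}. \<bar>s - t\<bar> < e \<longrightarrow> \<gamma> s \<in> ball (\<gamma> t) (R t) \<and>
     (\<forall>z \<in> ball (\<gamma> s) (R s) \<inter> ball (\<gamma> t) (R t). F s z = F t z)" if t: "t \<in> {0..T}" for t
  proof (cases "t < T2")
    case True
    have tin: "t \<in> {0..T2}" using t True by auto
    then obtain e where e: "e > 0" "\<forall>s\<in>{0..T2}. \<bar>s - t\<bar> < e \<longrightarrow> \<gamma> s \<in> ball (\<gamma> t) (r t) \<and>
     (\<forall>z \<in> ball (\<gamma> s) (r s) \<inter> ball (\<gamma> t) (r t). f s z = f t z)"
      using fl by blast
    show ?thesis
    proof (intro exI[of _ "min e (T2 - t)"] conjI ballI impI)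
      show "min e (T2 - t) > 0" using e True by auto
      fix s assume s: "s \<in> {0..T}" "\<bar>s - t\<bar> < min e (T2 - t)"
      then have sl: "s < T2" by auto
      then have sin: "s \<in> {0..T2}" using s by auto
      have es: "\<gamma> s \<in> ball (\<gamma> t) (r t) \<and> (\<forall>z \<in> ball (\<gamma> s) (r s) \<inter> ball (\<gamma> t) (r t). f s z = f t z)"
        using e(2) sin s(2) by (metis min_less_iff_conj)
      have eq: "R s = r s" "R t = r t" "F s = f s" "F t = f t" using sl True by (simp_all add: R_def F_def)
      show "\<gamma> s \<in> ball (\<gamma> t) (R t)" using es eq by simp
      fix z assume "z \<in> ball (\<gamma> s) (R s) \<inter> ball (\<gamma> t) (R t)"
      then show "F s z = F t z" using es eq by simp
    qed
  next
    case False
    show ?thesis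
    proof (cases "t = T2")
      case False
      then have tT: "t > T2" using \<open>\<not> t < T2\<close> by auto
      have tin: "t \<in> {T2..T}" using t tT by auto
      then obtain e where e: "e > 0" "\<forall>s\<in>{T2..T}. \<bar>s - t\<bar> < e \<longrightarrow> \<gamma> s \<in> ball (\<gamma> t) (q t) \<and>
       (\<forall>z \<in> ball (\<gamma> s) (q s) \<inter> ball (\<gamma> t) (q t). h s z = h t z)"
        using hl by blast
      show ?thesis
      proof (intro exI[of _ "min e (t - T2)"] conjI ballI impI)
        show "min e (t - T2) > 0" using e tT by auto
        fix s assume s: "s \<in> {0..T}" "\<bar>s - t\<bar> < min e (t - T2)"
        then have sl: "s > T2" by auto
        then have sin: "s \<in> {T2..T}" using s by auto
        have es: "\<gamma> s \<in> ball (\<gamma> t) (q t) \<and> (\<forall>z \<in> ball (\<gamma> s) (q s) \<inter> ball (\<gamma> t) (q t). h s z = h t z)"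
          using e(2) sin s(2) by (metis min_less_iff_conj)
        have eq: "R s = q s" "R t = q t" "F s = h s" "F t = h t" using sl tT by (simp_all add: R_def F_def)
        show "\<gamma> s \<in> ball (\<gamma> t) (R t)" using es eq by simp
        fix z assume "z \<in> ball (\<gamma> s) (R s) \<inter> ball (\<gamma> t) (R t)"
        then show "F s z = F t z" using es eq by simp
      qed
    next
      case True
      have T2in: "T2 \<in> {0..T2}" "T2 \<in> {T2..T}" using T2 by auto
      obtain e1 where e1: "e1 > 0" "\<forall>s\<in>{0..T2}. \<bar>s - T2\<bar> < e1 \<longrightarrow> \<gamma> s \<in> ball (\<gamma> T2) (r T2) \<and>
       (\<forall>z \<in> ball (\<gamma> s) (r s) \<inter> ball (\<gamma> T2) (r T2). f s z = f T2 z)" using fl T2in by blast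
      obtain e2 where e2: "e2 > 0" "\<forall>s\<in>{T2..T}. \<bar>s - T2\<bar> < e2 \<longrightarrow> \<gamma> s \<in> ball (\<gamma> T2) (q T2) \<and>
       (\<forall>z \<in> ball (\<gamma> s) (q s) \<inter> ball (\<gamma> T2) (q T2). h s z = h T2 z)" using hl T2in by blast
      have "T2 \<in> {0..T}" using T2 by auto
      then obtain d where d: "d > 0" "\<forall>s\<in>{0..T}. dist s T2 < d \<longrightarrow> dist (\<gamma> s) (\<gamma> T2) < m"
        using cont mpos unfolding continuous_on_iff by blast
      have Rt: "R t = m" "F t = f T2" using True T2 by (simp_all add: R_def m_def F_def)
      show ?thesis
      proof (intro exI[of _ "min d (min e1 e2)"] conjI ballI impI)
        show "min d (min e1 e2) > 0" using e1 e2 d by auto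
        fix s assume s: "s \<in> {0..T}" "\<bar>s - t\<bar> < min d (min e1 e2)"
        then have "dist (\<gamma> s) (\<gamma> T2) < m" using d True by (auto simp: dist_real_def)
        then show "\<gamma> s \<in> ball (\<gamma> t) (R t)" using True Rt by (simp add: dist_commute)
        fix z assume z: "z \<in> ball (\<gamma> s) (R s) \<inter> ball (\<gamma> t) (R t)"
        consider "s < T2" | "s = T2" | "s > T2" by linarith
        then show "F s z = F t z"
        proof cases
          case 1
          then have sin: "s \<in> {0..T2}" using s by auto
          have es: "\<forall>z \<in> ball (\<gamma> s) (r s) \<inter> ball (\<gamma> T2) (r T2). f s z = f T2 z"
            using e1(2) sin s(2) True by (metis min_less_iff_conj)
          have eq: "R s = r s" "F s = f s" using 1 by (simp_all add: R_def F_def)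
          have "z \<in> ball (\<gamma> s) (r s) \<inter> ball (\<gamma> T2) (r T2)" using z eq Rt True by (auto simp: m_def)
          then show ?thesis using es eq Rt by simp
        next
          case 2 then show ?thesis using True by simp
        next
          case 3
          then have sin: "s \<in> {T2..T}" using s by auto
          have es: "\<forall>z \<in> ball (\<gamma> s) (q s) \<inter> ball (\<gamma> T2) (q T2). h s z = h T2 z"
            using e2(2) sin s(2) True by (metis min_less_iff_conj)
          have eq: "R s = q s" "F s = h s" using 3 by (simp_all add: R_def F_def)
          have zz: "z \<in> ball (\<gamma> s) (q s) \<inter> ball (\<gamma> T2) (q T2)" using z eq Rt True by (auto simp: m_def)
          then have "h s z = h T2 z" using es by blast
          moreover have "f T2 z = h T2 z" using fh z Rt True by auto
          ultimately show ?thesis using eq Rt by simp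
        qed
      qed
    qed
  qed
  show ?thesis
    unfolding sfam_def F_def[symmetric] R_def[symmetric] using A B by blast
qed

lemma cont_along_extend:
  assumes ca: "cont_along a \<gamma> \<tau>" and tau: "0 \<le> \<tau>" "\<tau> \<le> T" and cont: "continuous_on {0..T} \<gamma>"
  shows "\<exists>\<epsilon>>0. \<forall>t. \<tau> \<le> t \<and> t \<le> T \<and> t < \<tau> + \<epsilon> \<longrightarrow> cont_along a \<gamma> t"
proof -
  obtain f r where fr: "cfam a \<gamma> \<tau> f r" using ca cont_along_cfam by blast
  have sf: "sfam \<gamma> 0 \<tau> f r" and init: "\<exists>e>0. \<forall>z\<in>ball 0 e. f 0 z = psum a z"
    using fr by (auto simp: cfam_def)
  have "\<tau> \<in> {0..\<tau>}" using tau by auto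
  then have rpos: "r \<tau> > 0" and hol: "f \<tau> holomorphic_on ball (\<gamma> \<tau>) (r \<tau>)"
    using sf by (auto simp: sfam_def)
  have "\<tau> \<in> {0..T}" using tau by auto
  then obtain d where d: "d > 0" "\<forall>s\<in>{0..T}. dist s \<tau> < d \<longrightarrow> dist (\<gamma> s) (\<gamma> \<tau>) < r \<tau>"
    using cont rpos unfolding continuous_on_iff by blast
  show ?thesis
  proof (intro exI[of _ d] conjI allI impI)
    show "d > 0" using d by simp
    fix t assume t: "\<tau> \<le> t \<and> t \<le> T \<and> t < \<tau> + d"
    have ct: "continuous_on {\<tau>..t} \<gamma>" "continuous_on {0..t} \<gamma>"
      using cont t tau by (auto intro: continuous_on_subset)
    have "\<gamma> ` {\<tau>..t} \<subseteq> ball (\<gamma> \<tau>) (r \<tau>)"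
    proof
      fix w assume "w \<in> \<gamma> ` {\<tau>..t}"
      then obtain s where s: "s \<in> {\<tau>..t}" "w = \<gamma> s" by auto
      then have "s \<in> {0..T}" "dist s \<tau> < d" using t tau by (auto simp: dist_real_def)
      then have "dist (\<gamma> s) (\<gamma> \<tau>) < r \<tau>" using d by blast
      then show "w \<in> ball (\<gamma> \<tau>) (r \<tau>)" using s by (simp add: dist_commute)
    qed
    then obtain q where q: "sfam \<gamma> \<tau> t (\<lambda>_. f \<tau>) q"
      using sfam_global[OF ct(1) hol] by blast
    have g: "sfam \<gamma> 0 t (\<lambda>s. if s \<le> \<tau> then f s else f \<tau>)
           (\<lambda>s. if s < \<tau> then r s else if s = \<tau> then min (r \<tau>) (q \<tau>) else q s)"
      by (rule sfam_glue[OF sf q tau(1) _ ct(2) rpos]) (use t in auto)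
    have "cfam a \<gamma> t (\<lambda>s. if s \<le> \<tau> then f s else f \<tau>)
           (\<lambda>s. if s < \<tau> then r s else if s = \<tau> then min (r \<tau>) (q \<tau>) else q s)"
      unfolding cfam_def using g init tau by simp
    then show "cont_along a \<gamma> t" using cont_along_cfam by blast
  qed
qed

definition psums :: "(real \<Rightarrow> complex) \<Rightarrow> real list \<Rightarrow> real" where
  "psums \<gamma> ps = (\<Sum>i<length ps - 1. norm (\<gamma> (ps ! Suc i) - \<gamma> (ps ! i)))"

definition PS :: "real \<Rightarrow> real \<Rightarrow> real list set" where
  "PS a b = {ps. sorted ps \<and> set ps \<subseteq> {a..b}}"

lemma path_len_alt: "path_len \<gamma> a b = Sup (psums \<gamma> ` PS a b)"
  unfolding path_len_def psums_def PS_def by simp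

lemma nil_PS: "[] \<in> PS a b" by (simp add: PS_def)

lemma psums_nil: "psums \<gamma> [] = 0" by (simp add: psums_def)

lemma tele:
  fixes ps :: "real list"
  assumes "ps \<in> PS a b" "a \<le> b"
  shows "(\<Sum>i<length ps - 1. (ps ! Suc i - ps ! i)) \<le> b - a"
proof (cases "ps = []")
  case True then show ?thesis using assms by simp
next
  case False
  have "(\<Sum>i<length ps - 1. (ps ! Suc i - ps ! i)) = ps ! (length ps - 1) - ps ! 0"
    by (rule sum_lessThan_telescope)
  moreover have "ps ! (length ps - 1) \<in> set ps" "ps ! 0 \<in> set ps" using False by (auto intro!: nth_mem)
  then have "ps ! (length ps - 1) \<in> {a..b}" "ps ! 0 \<in> {a..b}"
    using assms by (auto simp: PS_def)
  ultimately show ?thesis by auto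
qed

lemma sorted_step:
  assumes "ps \<in> PS a b" "i < length ps - 1"
  shows "ps ! i \<le> ps ! Suc i" "ps ! i \<in> {a..b}" "ps ! Suc i \<in> {a..b}"
proof -
  have m: "ps ! i \<in> set ps" "ps ! Suc i \<in> set ps" using assms(2) by (auto intro!: nth_mem)
  then show "ps ! i \<in> {a..b}" "ps ! Suc i \<in> {a..b}"
    using assms(1) unfolding PS_def by blast+
  show "ps ! i \<le> ps ! Suc i"
    using assms by (auto simp: PS_def sorted_iff_nth_mono)
qed

lemma psums_lip:
  assumes lip: "C-lipschitz_on {a..b} \<gamma>" and ps: "ps \<in> PS a b" and ab: "a \<le> b"
  shows "psums \<gamma> ps \<le> C * (b - a)"
proof -
  have "psums \<gamma> ps \<le> (\<Sum>i<length ps - 1. C * (ps ! Suc i - ps ! i))"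
    unfolding psums_def
  proof (rule sum_mono)
    fix i assume "i \<in> {..<length ps - 1}"
    then have i: "ps ! i \<le> ps ! Suc i" "ps ! i \<in> {a..b}" "ps ! Suc i \<in> {a..b}"
      using sorted_step[OF ps] by auto
    have "dist (\<gamma> (ps ! Suc i)) (\<gamma> (ps ! i)) \<le> C * dist (ps ! Suc i) (ps ! i)"
      using lip i by (auto simp: lipschitz_on_def)
    then show "norm (\<gamma> (ps ! Suc i) - \<gamma> (ps ! i)) \<le> C * (ps ! Suc i - ps ! i)"
      using i by (simp add: dist_norm dist_real_def)
  qed
  also have "\<dots> = C * (\<Sum>i<length ps - 1. (ps ! Suc i - ps ! i))"
    by (simp add: sum_distrib_left)
  also have "\<dots> \<le> C * (b - a)"
    using tele[OF ps ab] lip by (intro mult_left_mono) (auto simp: lipschitz_on_def)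
  finally show ?thesis .
qed

lemma psums_bdd:
  assumes lip: "C-lipschitz_on {a..b} \<gamma>" and ab: "a \<le> b"
  shows "bdd_above (psums \<gamma> ` PS a b)"
  using psums_lip[OF lip _ ab] by (auto intro!: bdd_aboveI)

lemma path_len_ge:
  assumes "C-lipschitz_on {a..b} \<gamma>" "a \<le> b" "ps \<in> PS a b"
  shows "psums \<gamma> ps \<le> path_len \<gamma> a b"
  unfolding path_len_alt using psums_bdd[OF assms(1,2)] assms(3) by (auto intro: cSup_upper)

lemma path_len_le:
  assumes "\<And>ps. ps \<in> PS a b \<Longrightarrow> psums \<gamma> ps \<le> B"
  shows "path_len \<gamma> a b \<le> B"
  unfolding path_len_alt using assms nil_PS by (auto intro!: cSup_least)

lemma path_len_nonneg:
  assumes "C-lipschitz_on {a..b} \<gamma>" "a \<le> b"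
  shows "0 \<le> path_len \<gamma> a b"
  using path_len_ge[OF assms nil_PS] psums_nil by simp

lemma PS_mono: "t \<le> b \<Longrightarrow> PS a t \<subseteq> PS a b"
  by (auto simp: PS_def)

lemma path_len_mono:
  assumes lip: "C-lipschitz_on {a..b} \<gamma>" and t: "a \<le> t" "t \<le> b"
  shows "path_len \<gamma> a t \<le> path_len \<gamma> a b"
proof -
  have "psums \<gamma> ps \<le> path_len \<gamma> a b" if "ps \<in> PS a t" for ps
    using path_len_ge[OF lip _ ] PS_mono[OF t(2)] that t by auto
  then show ?thesis by (rule path_len_le)
qed

lemma dist_le_len:
  assumes lip: "C-lipschitz_on {a..b} \<gamma>" and t: "a \<le> t" "t \<le> b"
  shows "norm (\<gamma> t - \<gamma> a) \<le> path_len \<gamma> a b"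
proof -
  have "[a, t] \<in> PS a b" using t by (auto simp: PS_def)
  moreover have "psums \<gamma> [a, t] = norm (\<gamma> t - \<gamma> a)" by (simp add: psums_def)
  ultimately show ?thesis using path_len_ge[OF lip] t by fastforce
qed

lemma path_len_perturb:
  assumes lip: "C-lipschitz_on {0..T} \<gamma>" and lipphi: "K-lipschitz_on {0..T} (\<phi> :: real \<Rightarrow> real)"
    and T: "0 \<le> T"
  shows "path_len (\<lambda>t. \<gamma> t + c * of_real (\<phi> t)) 0 T \<le> path_len \<gamma> 0 T + norm c * (K * T)"
proof (rule path_len_le)
  fix ps assume ps: "ps \<in> PS 0 T"
  have "psums (\<lambda>t. \<gamma> t + c * of_real (\<phi> t)) ps \<le> psums \<gamma> ps + norm c * psums (\<lambda>t. of_real (\<phi> t)) ps"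
    unfolding psums_def sum_distrib_left sum.distrib[symmetric]
  proof (rule sum_mono)
    fix i
    have "\<gamma> (ps ! Suc i) + c * of_real (\<phi> (ps ! Suc i)) - (\<gamma> (ps ! i) + c * of_real (\<phi> (ps ! i)))
        = (\<gamma> (ps ! Suc i) - \<gamma> (ps ! i)) + c * (of_real (\<phi> (ps ! Suc i)) - of_real (\<phi> (ps ! i)))"
      by (simp add: algebra_simps)
    then show "norm (\<gamma> (ps ! Suc i) + c * of_real (\<phi> (ps ! Suc i)) - (\<gamma> (ps ! i) + c * of_real (\<phi> (ps ! i))))
        \<le> norm (\<gamma> (ps ! Suc i) - \<gamma> (ps ! i)) + norm c * norm (of_real (\<phi> (ps ! Suc i)) - (of_real (\<phi> (ps ! i)) :: complex))"
      by (metis norm_mult norm_triangle_ineq)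
  qed
  also have "\<dots> \<le> path_len \<gamma> 0 T + norm c * (K * T)"
  proof (rule add_mono)
    show "psums \<gamma> ps \<le> path_len \<gamma> 0 T" using path_len_ge[OF lip T ps] .
    have lip2: "K-lipschitz_on {0..T} (\<lambda>t. (of_real (\<phi> t) :: complex))"
      using lipphi by (simp add: lipschitz_on_def dist_norm norm_of_real flip: of_real_diff)
    show "norm c * psums (\<lambda>t. of_real (\<phi> t)) ps \<le> norm c * (K * T)"
      using psums_lip[OF lip2 ps T] by (intro mult_left_mono) auto
  qed
  finally show "psums (\<lambda>t. \<gamma> t + c * of_real (\<phi> t)) ps \<le> path_len \<gamma> 0 T + norm c * (K * T)" .
qed

lemma path_len_reparam:
  assumes lip: "C-lipschitz_on {0..T} \<gamma>" and T: "0 < T"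
  shows "path_len (\<lambda>s. \<gamma> (T * s)) 0 1 \<le> path_len \<gamma> 0 T"
proof (rule path_len_le)
  fix ps assume ps: "ps \<in> PS 0 1"
  have "map ((*) T) ps \<in> PS 0 T"
    using ps T unfolding PS_def
    by (auto simp: sorted_map intro!: sorted_wrt_mono_rel[of _ "(\<le>)"] mult_left_mono)
  moreover have "psums (\<lambda>s. \<gamma> (T * s)) ps = psums \<gamma> (map ((*) T) ps)"
    by (simp add: psums_def)
  ultimately show "psums (\<lambda>s. \<gamma> (T * s)) ps \<le> path_len \<gamma> 0 T"
    using path_len_ge[OF lip] T by auto
qed

lemma cont_along_reparam:
  assumes ca: "cont_along a (\<lambda>s. \<gamma> (T * s)) 1" and T: "T > 0"
  shows "cont_along a \<gamma> T"
proof -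
  obtain f r where fr: "cfam a (\<lambda>s. \<gamma> (T * s)) 1 f r" using ca cont_along_cfam by blast
  have A: "\<forall>t\<in>{0..1}. r t > 0 \<and> f t holomorphic_on ball (\<gamma> (T * t)) (r t)"
   and B: "\<forall>t\<in>{0..1}. \<exists>e>0. \<forall>s\<in>{0..1}. \<bar>s - t\<bar> < e \<longrightarrow> \<gamma> (T * s) \<in> ball (\<gamma> (T * t)) (r t) \<and>
     (\<forall>z \<in> ball (\<gamma> (T * s)) (r s) \<inter> ball (\<gamma> (T * t)) (r t). f s z = f t z)"
   and C: "\<exists>e>0. \<forall>z\<in>ball 0 e. f 0 z = psum a z"
    using fr unfolding cfam_def sfam_def by blast+
  have sc: "t / T \<in> {0..1} \<longleftrightarrow> t \<in> {0..T}" for t using T by (auto simp: field_simps)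
  have tt: "T * (t / T) = t" for t using T by simp
  have "sfam \<gamma> 0 T (\<lambda>t. f (t / T)) (\<lambda>t. r (t / T))"
  proof -
  have S1: "\<forall>t\<in>{0..T}. 0 < r (t / T) \<and> f (t / T) holomorphic_on ball (\<gamma> t) (r (t / T))"
      using A sc tt by metis
  have S2: "\<exists>e>0. \<forall>s\<in>{0..T}. \<bar>s - t\<bar> < e \<longrightarrow> \<gamma> s \<in> ball (\<gamma> t) (r (t / T)) \<and>
     (\<forall>z\<in>ball (\<gamma> s) (r (s / T)) \<inter> ball (\<gamma> t) (r (t / T)). f (s / T) z = f (t / T) z)" if t: "t \<in> {0..T}" for t
  proof -
    obtain e where e: "e > 0" "\<forall>s\<in>{0..1}. \<bar>s - t / T\<bar> < e \<longrightarrow> \<gamma> (T * s) \<in> ball (\<gamma> (T * (t / T))) (r (t / T)) \<and>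
     (\<forall>z \<in> ball (\<gamma> (T * s)) (r s) \<inter> ball (\<gamma> (T * (t / T))) (r (t / T)). f s z = f (t / T) z)"
      using B t sc[of t] by blast
    show ?thesis
    proof (intro exI[of _ "e * T"] conjI ballI impI)
      show "e * T > 0" using e T by simp
      fix s assume s: "s \<in> {0..T}" "\<bar>s - t\<bar> < e * T"
      have "\<bar>s / T - t / T\<bar> = \<bar>s - t\<bar> / T" using T by (simp add: diff_divide_distrib[symmetric])
      also have "\<dots> < e" using s T by (simp add: divide_less_eq)
      finally have "\<bar>s / T - t / T\<bar> < e" .
      then have H: "\<gamma> (T * (s / T)) \<in> ball (\<gamma> (T * (t / T))) (r (t / T)) \<and>
     (\<forall>z \<in> ball (\<gamma> (T * (s / T))) (r (s / T)) \<inter> ball (\<gamma> (T * (t / T))) (r (t / T)). f (s / T) z = f (t / T) z)"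
        using e(2) sc[of s] s(1) by blast
      then show "\<gamma> s \<in> ball (\<gamma> t) (r (t / T))" unfolding tt by simp
      fix z assume "z \<in> ball (\<gamma> s) (r (s / T)) \<inter> ball (\<gamma> t) (r (t / T))"
      then show "f (s / T) z = f (t / T) z" using H unfolding tt by simp
    qed
  qed
  show ?thesis unfolding sfam_def using S1 S2 by blast
  qed
  then have "cfam a \<gamma> T (\<lambda>t. f (t / T)) (\<lambda>t. r (t / T))"
    unfolding cfam_def using C by simp
  then show ?thesis using cont_along_cfam by blast
qed

lemma compact_uniform:
  fixes K :: "real set" and Q :: "real \<Rightarrow> real \<Rightarrow> bool"
  assumes K: "compact K"
    and loc: "\<And>t. t\<in>K \<Longrightarrow> \<exists>\<delta>>0. \<exists>\<rho>>0. \<forall>s\<in>K. dist s t < \<delta> \<longrightarrow> Q s \<rho>"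
    and mono: "\<And>s \<rho> \<rho>'. Q s \<rho> \<Longrightarrow> 0 < \<rho>' \<Longrightarrow> \<rho>' \<le> \<rho> \<Longrightarrow> Q s \<rho>'"
  shows "\<exists>\<rho>>0. \<forall>s\<in>K. Q s \<rho>"
proof -
  obtain \<delta> \<rho> where dr: "\<And>t. t\<in>K \<Longrightarrow> \<delta> t > 0 \<and> \<rho> t > 0 \<and> (\<forall>s\<in>K. dist s t < \<delta> t \<longrightarrow> Q s (\<rho> t))"
    using loc by metis
  have "K \<subseteq> (\<Union>t\<in>K. ball t (\<delta> t))"
    using dr by force
  then obtain D where D: "D \<subseteq> K" "finite D" "K \<subseteq> (\<Union>t\<in>D. ball t (\<delta> t))"
    using compactE_image[OF K, of K "\<lambda>t. ball t (\<delta> t)"] by blast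
  show ?thesis
  proof (cases "D = {}")
    case True
    then have "K = {}" using D by auto
    then show ?thesis by (intro exI[of _ "1::real"]) auto
  next
    case False
    define m where "m = Min (\<rho> ` D)"
    have mpos: "m > 0" unfolding m_def using D False dr by (subst Min_gr_iff) auto
    show ?thesis
    proof (intro exI[of _ m] conjI ballI)
      show "m > 0" using mpos .
      fix s assume s: "s \<in> K"
      then obtain t where t: "t \<in> D" "s \<in> ball t (\<delta> t)" using D by blast
      then have "Q s (\<rho> t)" using dr D s by (auto simp: dist_commute)
      moreover have "m \<le> \<rho> t" unfolding m_def using D t by auto
      ultimately show "Q s m" using mono mpos by blast
    qed
  qed
qed

lemma tube:
  assumes sf: "sfam \<gamma> 0 T f r" and T: "0 \<le> T" and cont: "continuous_on {0..T} \<gamma>"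
  shows "\<exists>\<rho>>0. \<forall>\<gamma>'. continuous_on {0..T} \<gamma>' \<longrightarrow> (\<forall>t\<in>{0..T}. norm (\<gamma>' t - \<gamma> t) < \<rho>) \<longrightarrow>
     (\<exists>g q. sfam \<gamma>' 0 T g q \<and> (\<forall>t\<in>{0..T}. \<exists>\<eta>>0. \<forall>z\<in>ball (\<gamma> t) \<eta>. g t z = f t z))"
proof -
  have fr: "\<forall>t\<in>{0..T}. r t > 0 \<and> f t holomorphic_on ball (\<gamma> t) (r t)"
   and fl: "\<forall>t\<in>{0..T}. \<exists>e>0. \<forall>s\<in>{0..T}. \<bar>s - t\<bar> < e \<longrightarrow> \<gamma> s \<in> ball (\<gamma> t) (r t) \<and>
     (\<forall>z \<in> ball (\<gamma> s) (r s) \<inter> ball (\<gamma> t) (r t). f s z = f t z)"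
    using sf unfolding sfam_def by blast+
  define Q where "Q s \<rho> \<longleftrightarrow> (\<exists>G. G holomorphic_on ball (\<gamma> s) \<rho> \<and> (\<forall>z\<in>ball (\<gamma> s) (min \<rho> (r s)). G z = f s z))" for s \<rho>
  have "\<exists>\<rho>>0. \<forall>s\<in>{0..T}. Q s \<rho>"
  proof (rule compact_uniform)
    show "compact {0..T}" by simp
  next
    fix s \<rho> \<rho>' assume q: "Q s \<rho>" "0 < \<rho>'" "\<rho>' \<le> \<rho>"
    then obtain G where G: "G holomorphic_on ball (\<gamma> s) \<rho>" "\<forall>z\<in>ball (\<gamma> s) (min \<rho> (r s)). G z = f s z"
      unfolding Q_def by blast
    have "ball (\<gamma> s) \<rho>' \<subseteq> ball (\<gamma> s) \<rho>" using q by auto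
    then have "G holomorphic_on ball (\<gamma> s) \<rho>'" using G(1) holomorphic_on_subset by blast
    moreover have "\<forall>z\<in>ball (\<gamma> s) (min \<rho>' (r s)). G z = f s z" using G(2) q by auto
    ultimately show "Q s \<rho>'" unfolding Q_def by blast
  next
    fix t assume t: "t \<in> {0..T}"
    obtain e where e: "e > 0" "\<forall>s\<in>{0..T}. \<bar>s - t\<bar> < e \<longrightarrow> \<gamma> s \<in> ball (\<gamma> t) (r t) \<and>
     (\<forall>z \<in> ball (\<gamma> s) (r s) \<inter> ball (\<gamma> t) (r t). f s z = f t z)" using fl t by blast
    have rt: "r t > 0" "f t holomorphic_on ball (\<gamma> t) (r t)" using fr t by auto
    then obtain d where d: "d > 0" "\<forall>s\<in>{0..T}. dist s t < d \<longrightarrow> dist (\<gamma> s) (\<gamma> t) < r t / 2"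
      using cont t unfolding continuous_on_iff by (metis half_gt_zero)
    have core: "\<forall>s\<in>{0..T}. dist s t < min e d \<longrightarrow> Q s (r t / 2)"
    proof (intro ballI impI)
      fix s assume s: "s \<in> {0..T}" "dist s t < min e d"
      then have ds: "dist (\<gamma> s) (\<gamma> t) < r t / 2" using d by auto
      have es: "\<forall>z \<in> ball (\<gamma> s) (r s) \<inter> ball (\<gamma> t) (r t). f s z = f t z"
        using e s by (auto simp: dist_real_def)
      have sub: "ball (\<gamma> s) (r t / 2) \<subseteq> ball (\<gamma> t) (r t)"
      proof
        fix x assume "x \<in> ball (\<gamma> s) (r t / 2)"
        then have "dist (\<gamma> s) x < r t / 2" by simp
        moreover have "dist (\<gamma> t) x \<le> dist (\<gamma> t) (\<gamma> s) + dist (\<gamma> s) x" by (rule dist_triangle)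
        ultimately show "x \<in> ball (\<gamma> t) (r t)" using ds by (simp add: dist_commute)
      qed
      show "Q s (r t / 2)" unfolding Q_def
      proof (intro exI[of _ "f t"] conjI ballI)
        show "f t holomorphic_on ball (\<gamma> s) (r t / 2)" using holomorphic_on_subset[OF rt(2) sub] .
        fix z assume "z \<in> ball (\<gamma> s) (min (r t / 2) (r s))"
        then have "z \<in> ball (\<gamma> s) (r s) \<inter> ball (\<gamma> t) (r t)" using sub by auto
        then show "f t z = f s z" using es by auto
      qed
    qed
    moreover have "min e d > 0" "r t / 2 > 0" using e d rt by auto
    ultimately show "\<exists>\<delta>>0. \<exists>\<rho>>0. \<forall>s\<in>{0..T}. dist s t < \<delta> \<longrightarrow> Q s \<rho>" by blast
  qed
  then obtain \<rho>0 where \<rho>0: "\<rho>0 > 0" "\<forall>s\<in>{0..T}. Q s \<rho>0" by blast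
  define G where "G t = (SOME G. G holomorphic_on ball (\<gamma> t) \<rho>0 \<and> (\<forall>z\<in>ball (\<gamma> t) (min \<rho>0 (r t)). G z = f t z))" for t
  have G: "G t holomorphic_on ball (\<gamma> t) \<rho>0 \<and> (\<forall>z\<in>ball (\<gamma> t) (min \<rho>0 (r t)). G t z = f t z)" if "t \<in> {0..T}" for t
  proof -
    have "\<exists>G. G holomorphic_on ball (\<gamma> t) \<rho>0 \<and> (\<forall>z\<in>ball (\<gamma> t) (min \<rho>0 (r t)). G z = f t z)"
      using \<rho>0(2) that unfolding Q_def by blast
    then show ?thesis unfolding G_def by (rule someI_ex)
  qed
  show ?thesis
  proof (intro exI[of _ "\<rho>0 / 2"] conjI allI impI)
    show "\<rho>0 / 2 > 0" using \<rho>0 by simp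
    fix \<gamma>' assume c': "continuous_on {0..T} \<gamma>'" and close: "\<forall>t\<in>{0..T}. norm (\<gamma>' t - \<gamma> t) < \<rho>0 / 2"
    have subb: "ball (\<gamma>' t) (\<rho>0 / 2) \<subseteq> ball (\<gamma> t) \<rho>0" if "t \<in> {0..T}" for t
    proof
      fix z assume "z \<in> ball (\<gamma>' t) (\<rho>0 / 2)"
      then have "dist (\<gamma> t) z \<le> dist (\<gamma> t) (\<gamma>' t) + dist (\<gamma>' t) z" "dist (\<gamma>' t) z < \<rho>0 / 2"
        using dist_triangle by auto
      moreover have "dist (\<gamma> t) (\<gamma>' t) < \<rho>0 / 2" using close that by (simp add: dist_norm norm_minus_commute)
      ultimately show "z \<in> ball (\<gamma> t) \<rho>0" by simp
    qed
    have S1: "\<forall>t\<in>{0..T}. \<rho>0 / 2 > 0 \<and> G t holomorphic_on ball (\<gamma>' t) (\<rho>0 / 2)"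
    proof
      fix t assume t: "t \<in> {0..T}"
      show "\<rho>0 / 2 > 0 \<and> G t holomorphic_on ball (\<gamma>' t) (\<rho>0 / 2)"
        using \<rho>0 holomorphic_on_subset[OF conjunct1[OF G[OF t]] subb[OF t]] by simp
    qed
    have S2: "\<exists>e>0. \<forall>s\<in>{0..T}. \<bar>s - t\<bar> < e \<longrightarrow> \<gamma>' s \<in> ball (\<gamma>' t) (\<rho>0 / 2) \<and>
       (\<forall>z \<in> ball (\<gamma>' s) (\<rho>0 / 2) \<inter> ball (\<gamma>' t) (\<rho>0 / 2). G s z = G t z)" if t: "t \<in> {0..T}" for t
    proof -
      obtain e where e: "e > 0" "\<forall>s\<in>{0..T}. \<bar>s - t\<bar> < e \<longrightarrow> \<gamma> s \<in> ball (\<gamma> t) (r t) \<and>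
       (\<forall>z \<in> ball (\<gamma> s) (r s) \<inter> ball (\<gamma> t) (r t). f s z = f t z)" using fl t by blast
      obtain d1 where d1: "d1 > 0" "\<forall>s\<in>{0..T}. dist s t < d1 \<longrightarrow> dist (\<gamma>' s) (\<gamma>' t) < \<rho>0 / 2"
        using c' t \<rho>0 unfolding continuous_on_iff by (metis half_gt_zero)
      obtain d2 where d2: "d2 > 0" "\<forall>s\<in>{0..T}. dist s t < d2 \<longrightarrow> dist (\<gamma> s) (\<gamma> t) < \<rho>0"
        using cont t \<rho>0 unfolding continuous_on_iff by metis
      show ?thesis
      proof (intro exI[of _ "min e (min d1 d2)"] conjI ballI impI)
        show "min e (min d1 d2) > 0" using e d1 d2 by auto
        fix s assume s: "s \<in> {0..T}" "\<bar>s - t\<bar> < min e (min d1 d2)"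
        then show "\<gamma>' s \<in> ball (\<gamma>' t) (\<rho>0 / 2)" using d1 by (auto simp: dist_real_def dist_commute)
        have "\<bar>s - t\<bar> < e" using s(2) by simp
        then have es: "\<gamma> s \<in> ball (\<gamma> t) (r t) \<and> (\<forall>z \<in> ball (\<gamma> s) (r s) \<inter> ball (\<gamma> t) (r t). f s z = f t z)"
          using e(2) s(1) by blast
        have ds: "dist (\<gamma> s) (\<gamma> t) < \<rho>0" using d2 s by (auto simp: dist_real_def)
        have rs: "r s > 0" using fr s by auto
        define W where "W = ball (\<gamma> s) (min \<rho>0 (r s)) \<inter> ball (\<gamma> t) (min \<rho>0 (r t))"
        have gW: "\<gamma> s \<in> W" using es ds rs \<rho>0 unfolding W_def by (simp add: dist_commute)
        have eqW: "G s z = G t z" if "z \<in> W" for z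
        proof -
          have zW: "z \<in> ball (\<gamma> s) (min \<rho>0 (r s))" "z \<in> ball (\<gamma> t) (min \<rho>0 (r t))" using that by (simp_all add: W_def)
          have "G s z = f s z" using conjunct2[OF G[OF s(1)]] zW(1) by blast
          also have "\<dots> = f t z" using es zW by auto
          also have "\<dots> = G t z" using conjunct2[OF G[OF t]] zW(2) by simp
          finally show ?thesis .
        qed
        fix z assume z: "z \<in> ball (\<gamma>' s) (\<rho>0 / 2) \<inter> ball (\<gamma>' t) (\<rho>0 / 2)"
        show "G s z = G t z"
        proof (rule ident_balls[of "G s" "ball (\<gamma> s) \<rho>0 \<inter> ball (\<gamma> t) \<rho>0" "G t" "\<gamma> s" \<rho>0 "\<gamma> t" \<rho>0 W z])
          show "G s holomorphic_on ball (\<gamma> s) \<rho>0 \<inter> ball (\<gamma> t) \<rho>0" using G[OF s(1)] holomorphic_on_subset by blast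
          show "G t holomorphic_on ball (\<gamma> s) \<rho>0 \<inter> ball (\<gamma> t) \<rho>0" using G[OF t] holomorphic_on_subset by blast
          show "open W" by (simp add: W_def open_Int)
          show "W \<noteq> {}" using gW by auto
          show "W \<subseteq> ball (\<gamma> s) \<rho>0 \<inter> ball (\<gamma> t) \<rho>0" by (auto simp: W_def)
          show "z \<in> ball (\<gamma> s) \<rho>0 \<inter> ball (\<gamma> t) \<rho>0" using z subb[OF s(1)] subb[OF t] by blast
        qed (use eqW in auto)
      qed
    qed
    have "sfam \<gamma>' 0 T G (\<lambda>_. \<rho>0 / 2)" unfolding sfam_def using S1 S2 by blast
    moreover have "\<forall>t\<in>{0..T}. \<exists>\<eta>>0. \<forall>z\<in>ball (\<gamma> t) \<eta>. G t z = f t z"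
    proof
      fix t assume t: "t \<in> {0..T}"
      show "\<exists>\<eta>>0. \<forall>z\<in>ball (\<gamma> t) \<eta>. G t z = f t z"
        using G[OF t] fr t \<rho>0 by (intro exI[of _ "min \<rho>0 (r t)"]) auto
    qed
    ultimately show "\<exists>g q. sfam \<gamma>' 0 T g q \<and> (\<forall>t\<in>{0..T}. \<exists>\<eta>>0. \<forall>z\<in>ball (\<gamma> t) \<eta>. g t z = f t z)"
      by blast
  qed
qed

lemma gl:
  fixes \<gamma> :: "real \<Rightarrow> complex"
  assumes lip: "C-lipschitz_on {0..T1} \<gamma>" and st: "0 < t" "t \<le> T1" "0 < s" "s \<le> T1" "t / 2 < s"
  shows "norm ((w - \<gamma> s) / of_real s - (w - \<gamma> t) / of_real t) \<le> 2 * (norm (w - \<gamma> t) + t * C) / t^2 * \<bar>s - t\<bar>"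
proof -
  have C: "C \<ge> 0" using lip by (simp add: lipschitz_on_def)
  have L: "norm (\<gamma> t - \<gamma> s) \<le> C * \<bar>s - t\<bar>"
  proof -
    have "t \<in> {0..T1}" "s \<in> {0..T1}" using st by auto
    then have "dist (\<gamma> t) (\<gamma> s) \<le> C * dist t s" using lip by (simp add: lipschitz_on_def)
    then show ?thesis by (simp add: dist_norm dist_real_def abs_minus_commute)
  qed
  have eq: "(w - \<gamma> s) / of_real s - (w - \<gamma> t) / of_real t
      = ((w - \<gamma> t) * of_real (t - s) + of_real t * (\<gamma> t - \<gamma> s)) / of_real (s * t)"
    using st by (simp add: field_simps)
  define N where "N = norm (w - \<gamma> t) + t * C"
  have N: "N \<ge> 0" using C st by (simp add: N_def)
  have "norm ((w - \<gamma> t) * of_real (t - s) + of_real t * (\<gamma> t - \<gamma> s))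
        \<le> norm (w - \<gamma> t) * \<bar>s - t\<bar> + t * (C * \<bar>s - t\<bar>)"
  proof -
    have "norm ((w - \<gamma> t) * of_real (t - s) + of_real t * (\<gamma> t - \<gamma> s))
        \<le> norm ((w - \<gamma> t) * of_real (t - s)) + norm (of_real t * (\<gamma> t - \<gamma> s))"
      by (rule norm_triangle_ineq)
    also have "\<dots> = norm (w - \<gamma> t) * \<bar>s - t\<bar> + t * norm (\<gamma> t - \<gamma> s)"
      using st by (simp add: norm_mult abs_minus_commute flip: of_real_diff)
    also have "\<dots> \<le> norm (w - \<gamma> t) * \<bar>s - t\<bar> + t * (C * \<bar>s - t\<bar>)"
      using L st by (intro add_left_mono mult_left_mono) auto
    finally show ?thesis .
  qed
  also have "\<dots> = N * \<bar>s - t\<bar>" by (simp add: N_def algebra_simps)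
  finally have num: "norm ((w - \<gamma> t) * of_real (t - s) + of_real t * (\<gamma> t - \<gamma> s)) \<le> N * \<bar>s - t\<bar>" .
  have "norm ((w - \<gamma> s) / of_real s - (w - \<gamma> t) / of_real t)
      = norm ((w - \<gamma> t) * of_real (t - s) + of_real t * (\<gamma> t - \<gamma> s)) / (s * t)"
  proof -
    have "norm (complex_of_real (s * t)) = s * t" using st by (simp only: norm_of_real abs_of_pos mult_pos_pos)
    then show ?thesis unfolding eq norm_divide by simp
  qed
  also have "\<dots> \<le> N * \<bar>s - t\<bar> / (s * t)"
    using num st by (intro divide_right_mono) auto
  also have "\<dots> \<le> N * \<bar>s - t\<bar> / (t ^ 2 / 2)"
    using st N by (intro divide_left_mono) (auto simp: power2_eq_square intro: mult_right_mono)
  also have "\<dots> = 2 * N / t^2 * \<bar>s - t\<bar>" by (simp add: field_simps)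
  finally show ?thesis by (simp add: N_def)
qed

lemma avoid:
  fixes \<gamma> :: "real \<Rightarrow> complex"
  assumes lip: "C-lipschitz_on {0..T1} \<gamma>" and F: "finite F" and eps: "\<epsilon> > 0"
  shows "\<exists>c. norm c < \<epsilon> \<and> (\<forall>t\<in>{0<..T1}. \<forall>w\<in>F. \<gamma> t + c * of_real t \<noteq> w)"
proof -
  define g where "g w x = (w - \<gamma> (Re x)) / of_real (Re x)" for w x :: complex
  define S where "S = (of_real ` {0<..T1} :: complex set)"
  have negS: "negligible S"
  proof (rule negligible_subset[OF negligible_hyperplane[of \<i> 0]])
    show "\<i> \<noteq> 0 \<or> (0::real) \<noteq> 0" by simp
    show "S \<subseteq> {x. \<i> \<bullet> x = 0}" by (auto simp: S_def inner_complex_def)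
  qed
  have negw: "negligible (g w ` S)" for w
  proof (rule negligible_locally_Lipschitz_image[OF _ negS])
    show "DIM(complex) \<le> DIM(complex)" by simp
    fix x assume "x \<in> S"
    then obtain t where t: "t \<in> {0<..T1}" "x = of_real t" by (auto simp: S_def)
    show "\<exists>U B. open U \<and> x \<in> U \<and> (\<forall>y\<in>S \<inter> U. norm (g w y - g w x) \<le> B * norm (y - x))"
    proof (intro exI conjI ballI)
      show "open {y. Re y > t / 2}" by (rule open_halfspace_Re_gt)
      show "x \<in> {y. Re y > t / 2}" using t by simp
      fix y assume "y \<in> S \<inter> {y. Re y > t / 2}"
      then obtain s where s: "s \<in> {0<..T1}" "y = of_real s" "s > t / 2" by (auto simp: S_def)
      have "norm (g w y - g w x) \<le> 2 * (norm (w - \<gamma> t) + t * C) / t^2 * \<bar>s - t\<bar>"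
        using gl[OF lip, of t s w] t s by (simp add: g_def)
      also have "\<bar>s - t\<bar> = norm (y - x)" using s t by (simp flip: of_real_diff)
      finally show "norm (g w y - g w x) \<le> 2 * (norm (w - \<gamma> t) + t * C) / t^2 * norm (y - x)" .
    qed
  qed
  define Bad where "Bad = \<Union> ((\<lambda>w. g w ` S) ` F)"
  have "negligible Bad" unfolding Bad_def using F negw by (intro negligible_Union) auto
  moreover have "\<not> negligible (ball (0::complex) \<epsilon>)" using eps by (intro open_not_negligible) auto
  ultimately have "\<not> ball 0 \<epsilon> \<subseteq> Bad" using negligible_subset by blast
  then obtain c where c: "c \<in> ball 0 \<epsilon>" "c \<notin> Bad" by blast
  show ?thesis
  proof (intro exI[of _ c] conjI ballI)
    show "norm c < \<epsilon>" using c by simp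
    fix t w assume t: "t \<in> {0<..T1}" and w: "w \<in> F"
    show "\<gamma> t + c * of_real t \<noteq> w"
    proof
      assume "\<gamma> t + c * of_real t = w"
      then have "c = g w (of_real t)" using t by (auto simp: g_def field_simps)
      moreover have "g w (of_real t) \<in> g w ` S" using t by (auto simp: S_def)
      then have "g w (of_real t) \<in> Bad" using w unfolding Bad_def by blast
      ultimately show False using c by simp
    qed
  qed
qed

lemma sfam_sub:
  assumes "sfam \<gamma> A B f r" "A \<le> A'" "B' \<le> B"
  shows "sfam \<gamma> A' B' f r"
proof -
  have fr: "\<forall>t\<in>{A..B}. r t > 0 \<and> f t holomorphic_on ball (\<gamma> t) (r t)"
   and fl: "\<forall>t\<in>{A..B}. \<exists>e>0. \<forall>s\<in>{A..B}. \<bar>s - t\<bar> < e \<longrightarrow> \<gamma> s \<in> ball (\<gamma> t) (r t) \<and>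
     (\<forall>z \<in> ball (\<gamma> s) (r s) \<inter> ball (\<gamma> t) (r t). f s z = f t z)"
    using assms(1) unfolding sfam_def by blast+
  have sub: "{A'..B'} \<subseteq> {A..B}" using assms by auto
  have S1: "\<forall>t\<in>{A'..B'}. r t > 0 \<and> f t holomorphic_on ball (\<gamma> t) (r t)" using fr sub by blast
  have S2: "\<forall>t\<in>{A'..B'}. \<exists>e>0. \<forall>s\<in>{A'..B'}. \<bar>s - t\<bar> < e \<longrightarrow> \<gamma> s \<in> ball (\<gamma> t) (r t) \<and>
     (\<forall>z \<in> ball (\<gamma> s) (r s) \<inter> ball (\<gamma> t) (r t). f s z = f t z)"
  proof
    fix t assume "t \<in> {A'..B'}"
    then obtain e where "e > 0" "\<forall>s\<in>{A..B}. \<bar>s - t\<bar> < e \<longrightarrow> \<gamma> s \<in> ball (\<gamma> t) (r t) \<and>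
     (\<forall>z \<in> ball (\<gamma> s) (r s) \<inter> ball (\<gamma> t) (r t). f s z = f t z)" using fl sub by blast
    then show "\<exists>e>0. \<forall>s\<in>{A'..B'}. \<bar>s - t\<bar> < e \<longrightarrow> \<gamma> s \<in> ball (\<gamma> t) (r t) \<and>
     (\<forall>z \<in> ball (\<gamma> s) (r s) \<inter> ball (\<gamma> t) (r t). f s z = f t z)" using sub by blast
  qed
  show ?thesis unfolding sfam_def using S1 S2 by blast
qed

lemma sfam_cong:
  assumes "sfam \<gamma> A B f r" "\<And>t. t \<in> {A..B} \<Longrightarrow> \<gamma>' t = \<gamma> t"
  shows "sfam \<gamma>' A B f r"
proof -
  have fr: "\<forall>t\<in>{A..B}. r t > 0 \<and> f t holomorphic_on ball (\<gamma> t) (r t)"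
   and fl: "\<forall>t\<in>{A..B}. \<exists>e>0. \<forall>s\<in>{A..B}. \<bar>s - t\<bar> < e \<longrightarrow> \<gamma> s \<in> ball (\<gamma> t) (r t) \<and>
     (\<forall>z \<in> ball (\<gamma> s) (r s) \<inter> ball (\<gamma> t) (r t). f s z = f t z)"
    using assms(1) unfolding sfam_def by blast+
  have S1: "\<forall>t\<in>{A..B}. r t > 0 \<and> f t holomorphic_on ball (\<gamma>' t) (r t)" using fr assms(2) by simp
  have S2: "\<forall>t\<in>{A..B}. \<exists>e>0. \<forall>s\<in>{A..B}. \<bar>s - t\<bar> < e \<longrightarrow> \<gamma>' s \<in> ball (\<gamma>' t) (r t) \<and>
     (\<forall>z \<in> ball (\<gamma>' s) (r s) \<inter> ball (\<gamma>' t) (r t). f s z = f t z)"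
    using fl assms(2) by simp
  show ?thesis unfolding sfam_def using S1 S2 by blast
qed

lemma min_lip: "\<bar>min (a::real) b - min c d\<bar> \<le> max \<bar>a - c\<bar> \<bar>b - d\<bar>"
  by (simp add: min_def max_def abs_if)

lemma max0_lip: "\<bar>max 0 (a::real) - max 0 c\<bar> \<le> \<bar>a - c\<bar>"
  by (simp add: max_def abs_if)

definition sing_reach :: "(nat \<Rightarrow> complex) \<Rightarrow> real \<Rightarrow> complex \<Rightarrow> bool" where
  "sing_reach a l \<omega> \<longleftrightarrow> (\<exists>\<gamma> T C. C-lipschitz_on {0..T} \<gamma> \<and> 0 \<le> T \<and> \<gamma> 0 = 0 \<and> \<gamma> T = \<omega> \<and>
      path_len \<gamma> 0 T \<le> l \<and> (\<forall>t\<in>{0..<T}. cont_along a \<gamma> t) \<and> \<not> cont_along a \<gamma> T)"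

lemma sing_in_F:
  assumes germ: "conv_germ a" and F: "finite F"
    and hypF: "\<forall>\<gamma>. lipschitz_path \<gamma> 1 \<and> \<gamma> 0 = 0 \<and> path_len \<gamma> 0 1 < L \<and>
              \<gamma> ` {0<..1} \<subseteq> - F \<longrightarrow> cont_along a \<gamma> 1"
    and sr: "sing_reach a l \<omega>" and lL: "l < L"
  shows "\<omega> \<in> F"
proof (rule ccontr)
  assume nF: "\<omega> \<notin> F"
  obtain \<gamma> T C where lip: "C-lipschitz_on {0..T} \<gamma>" and T0: "0 \<le> T" and g0: "\<gamma> 0 = 0" and gT: "\<gamma> T = \<omega>"
    and len: "path_len \<gamma> 0 T \<le> l" and before: "\<forall>t\<in>{0..<T}. cont_along a \<gamma> t" and nc: "\<not> cont_along a \<gamma> T"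
    using sr unfolding sing_reach_def by blast
  have C0: "C \<ge> 0" using lip by (simp add: lipschitz_on_def)
  have T: "T > 0"
  proof (rule ccontr)
    assume "\<not> T > 0"
    then have "T = 0" using T0 by simp
    then show False using nc cont_along_zero[of a \<gamma>, OF germ g0] by simp
  qed
  have cont: "continuous_on {0..T} \<gamma>" using lip by (rule lipschitz_on_continuous_on)
  obtain d0 where d0: "d0 > 0" "\<forall>x\<in>F. x \<noteq> \<omega> \<longrightarrow> d0 \<le> dist \<omega> x" using finite_set_avoid[OF F] by blast
  have d0F: "z \<notin> F" if "dist z \<omega> < d0" for z
    using d0 that nF by (metis dist_commute leD)
  have "T \<in> {0..T}" using T by auto
  then obtain \<eta> where \<eta>: "\<eta> > 0" "\<forall>s\<in>{0..T}. dist s T < \<eta> \<longrightarrow> dist (\<gamma> s) (\<gamma> T) < d0 / 2"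
    using cont d0 unfolding continuous_on_iff by (metis half_gt_zero)
  define h where "h = min \<eta> T"
  have h: "h > 0" "h \<le> T" "h \<le> \<eta>" using \<eta> T by (auto simp: h_def)
  define T1 where "T1 = T - h / 2"
  define T2 where "T2 = T - h / 4"
  have TT: "0 < T1" "T1 < T2" "T2 < T" using h by (auto simp: T1_def T2_def)
  have nearT: "dist (\<gamma> s) \<omega> < d0 / 2" if "s \<in> {T1..T}" for s
    using \<eta>(2) that h gT by (auto simp: T1_def dist_real_def)
  have "T2 \<in> {0..<T}" using TT by auto
  then have "cont_along a \<gamma> T2" using before by blast
  then obtain f r where fr: "cfam a \<gamma> T2 f r" using cont_along_cfam by blast
  have sf: "sfam \<gamma> 0 T2 f r" and finit: "\<exists>e>0. \<forall>z\<in>ball 0 e. f 0 z = psum a z"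
    using fr by (auto simp: cfam_def)
  have cont2: "continuous_on {0..T2} \<gamma>" using cont TT by (auto intro: continuous_on_subset)
  obtain \<rho> where \<rho>: "\<rho> > 0" and tubeP: "\<And>\<gamma>'. continuous_on {0..T2} \<gamma>' \<Longrightarrow> (\<forall>t\<in>{0..T2}. norm (\<gamma>' t - \<gamma> t) < \<rho>) \<Longrightarrow>
     (\<exists>g q. sfam \<gamma>' 0 T2 g q \<and> (\<forall>t\<in>{0..T2}. \<exists>\<eta>>0. \<forall>z\<in>ball (\<gamma> t) \<eta>. g t z = f t z))"
    using tube[OF sf _ cont2] TT by force
  define K' where "K' = T1 / (T2 - T1)"
  have K'0: "K' \<ge> 0" using TT by (simp add: K'_def)
  have K'T: "K' * (T2 - T1) = T1" using TT by (simp add: K'_def)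
  define K where "K = max 1 K'"
  have K1: "K \<ge> 1" by (simp add: K_def)
  define \<phi> where "\<phi> t = max 0 (min t (K' * (T2 - t)))" for t
  have philip: "\<bar>\<phi> x - \<phi> y\<bar> \<le> K * \<bar>x - y\<bar>" for x y
  proof -
    have "\<bar>\<phi> x - \<phi> y\<bar> \<le> \<bar>min x (K' * (T2 - x)) - min y (K' * (T2 - y))\<bar>"
      unfolding \<phi>_def by (rule max0_lip)
    also have "\<dots> \<le> max \<bar>x - y\<bar> \<bar>K' * (T2 - x) - K' * (T2 - y)\<bar>" by (rule min_lip)
    also have "\<bar>K' * (T2 - x) - K' * (T2 - y)\<bar> = K' * \<bar>x - y\<bar>"
      using K'0 by (simp add: right_diff_distrib[symmetric] abs_mult abs_minus_commute)
    also have "max \<bar>x - y\<bar> (K' * \<bar>x - y\<bar>) \<le> K * \<bar>x - y\<bar>"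
      by (simp add: K_def max_mult_distrib_right)
    finally show ?thesis .
  qed
  have phi0: "\<phi> 0 = 0" using K'0 TT by (simp add: \<phi>_def)
  have phiT1: "\<phi> t = t" if "0 \<le> t" "t \<le> T1" for t
  proof -
    have "K' * (T2 - t) \<ge> K' * (T2 - T1)" using that K'0 by (intro mult_left_mono) auto
    then show ?thesis using that K'T by (simp add: \<phi>_def)
  qed
  have phiT2: "\<phi> t = 0" if "T2 \<le> t" for t
  proof -
    have "K' * (T2 - t) \<le> 0" using that K'0 by (simp add: mult_nonneg_nonpos)
    then show ?thesis by (simp add: \<phi>_def)
  qed
  have phibd: "0 \<le> \<phi> t \<and> \<phi> t \<le> T1" if "0 \<le> t" for t
  proof (cases "t \<le> T1")
    case True then show ?thesis using phiT1 that by simp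
  next
    case False
    have "K' * (T2 - t) \<le> K' * (T2 - T1)" using False K'0 by (intro mult_left_mono) auto
    then show ?thesis using K'T TT by (simp add: \<phi>_def min_le_iff_disj)
  qed
  define \<epsilon> where "\<epsilon> = min (\<rho> / (T + 1)) (min (d0 / (2 * (T + 1))) ((L - l) / (K * T + 1)))"
  have "K * T + 1 > 0" using K1 T by (simp add: add_pos_pos)
  then have "(L - l) / (K * T + 1) > 0" using lL by simp
  then have \<epsilon>: "\<epsilon> > 0" using \<rho> d0 T by (auto simp: \<epsilon>_def)
  have lip1: "C-lipschitz_on {0..T1} \<gamma>" using lipschitz_on_subset[OF lip, of "{0..T1}"] TT by auto
  obtain c where c: "norm c < \<epsilon>" and cav: "\<forall>t\<in>{0<..T1}. \<forall>w\<in>F. \<gamma> t + c * of_real t \<noteq> w"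
    using avoid[OF lip1 F \<epsilon>] by blast
  have cT: "norm c * T < \<rho>" "norm c * T < d0 / 2" "norm c * (K * T) < L - l"
  proof -
    have "norm c * T \<le> \<epsilon> * T" using c T by (intro mult_right_mono) auto
    also have "\<dots> < \<epsilon> * (T + 1)" using \<epsilon> by simp
    finally have A: "norm c * T < \<epsilon> * (T + 1)" .
    have "\<epsilon> * (T + 1) \<le> \<rho> / (T + 1) * (T + 1)" using T by (intro mult_right_mono) (auto simp: \<epsilon>_def)
    then show "norm c * T < \<rho>" using A T by simp
    have "\<epsilon> * (T + 1) \<le> d0 / (2 * (T + 1)) * (T + 1)" using T by (intro mult_right_mono) (auto simp: \<epsilon>_def)
    moreover have "d0 / (2 * (T + 1)) * (T + 1) = d0 / 2" using T by (simp add: field_simps)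
    ultimately show "norm c * T < d0 / 2" using A by linarith
    have "norm c * (K * T) \<le> \<epsilon> * (K * T)" using c T K1 by (intro mult_right_mono) auto
    also have "\<dots> < \<epsilon> * (K * T + 1)" using \<epsilon> by (simp add: distrib_left)
    also have "\<dots> \<le> (L - l) / (K * T + 1) * (K * T + 1)"
      using T K1 by (intro mult_right_mono) (auto simp: \<epsilon>_def)
    also have "\<dots> = L - l"
    proof -
      have "K * T + 1 \<noteq> 0" using T K1 by (smt (verit) mult_pos_pos)
      then show ?thesis by simp
    qed
    finally show "norm c * (K * T) < L - l" .
  qed
  define \<gamma>' where "\<gamma>' t = \<gamma> t + c * of_real (\<phi> t)" for t
  have g'0: "\<gamma>' 0 = 0" using g0 phi0 by (simp add: \<gamma>'_def)
  have g'T2: "\<gamma>' t = \<gamma> t" if "T2 \<le> t" for t using phiT2[OF that] by (simp add: \<gamma>'_def)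
  have close: "norm (\<gamma>' t - \<gamma> t) \<le> norm c * T" if "0 \<le> t" for t
  proof -
    have "norm (\<gamma>' t - \<gamma> t) = norm c * \<bar>\<phi> t\<bar>" by (simp add: \<gamma>'_def norm_mult)
    also have "\<dots> \<le> norm c * T" using phibd[OF that] TT by (intro mult_left_mono) auto
    finally show ?thesis .
  qed
  have philipK: "K-lipschitz_on {0..T} \<phi>"
    unfolding lipschitz_on_def using philip K1 by (auto simp: dist_real_def)
  have lip': "(C + norm c * K)-lipschitz_on {0..T} \<gamma>'"
    unfolding lipschitz_on_def
  proof (intro conjI ballI)
    show "0 \<le> C + norm c * K" using C0 K1 by simp
    fix x y assume xy: "x \<in> {0..T}" "y \<in> {0..T}"
    have "dist (\<gamma>' x) (\<gamma>' y) = norm ((\<gamma> x - \<gamma> y) + c * of_real (\<phi> x - \<phi> y))"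
      by (simp add: \<gamma>'_def dist_norm algebra_simps)
    also have "\<dots> \<le> norm (\<gamma> x - \<gamma> y) + norm c * \<bar>\<phi> x - \<phi> y\<bar>"
      by (metis norm_mult norm_of_real norm_triangle_ineq)
    also have "\<dots> \<le> C * \<bar>x - y\<bar> + norm c * (K * \<bar>x - y\<bar>)"
      using lipschitz_onD[OF lip xy] philip[of x y]
      by (intro add_mono mult_left_mono) (auto simp: dist_norm dist_real_def)
    also have "\<dots> = (C + norm c * K) * dist x y" by (simp add: dist_real_def algebra_simps)
    finally show "dist (\<gamma>' x) (\<gamma>' y) \<le> (C + norm c * K) * dist x y" .
  qed
  have cont': "continuous_on {0..T} \<gamma>'" using lip' by (rule lipschitz_on_continuous_on)
  have len': "path_len \<gamma>' 0 T < L"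
  proof -
    have "path_len \<gamma>' 0 T \<le> path_len \<gamma> 0 T + norm c * (K * T)"
      unfolding \<gamma>'_def using path_len_perturb[OF lip philipK T0] by simp
    then show ?thesis using len cT by linarith
  qed
  have avoid': "\<gamma>' t \<notin> F" if "t \<in> {0<..T}" for t
  proof (cases "t \<le> T1")
    case True
    then have "\<gamma>' t = \<gamma> t + c * of_real t" using phiT1[of t] that by (simp add: \<gamma>'_def)
    then show ?thesis using cav True that by auto
  next
    case False
    then have "dist (\<gamma> t) \<omega> < d0 / 2" using nearT that by auto
    moreover have "norm (\<gamma>' t - \<gamma> t) < d0 / 2" using close[of t] cT that by auto
    moreover have "dist (\<gamma>' t) \<omega> \<le> dist (\<gamma>' t) (\<gamma> t) + dist (\<gamma> t) \<omega>" by (rule dist_triangle)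
    moreover have "dist (\<gamma>' t) (\<gamma> t) = norm (\<gamma>' t - \<gamma> t)" by (simp add: dist_norm)
    ultimately have "dist (\<gamma>' t) \<omega> < d0" by linarith
    then show ?thesis using d0F by blast
  qed
  define \<gamma>'' where "\<gamma>'' s = \<gamma>' (T * s)" for s
  have g''eq: "\<gamma>'' = (\<lambda>s. \<gamma>' (T * s))" by (simp add: fun_eq_iff \<gamma>''_def)
  have lip'': "((C + norm c * K) * T)-lipschitz_on {0..1} \<gamma>''"
    unfolding lipschitz_on_def
  proof (intro conjI ballI)
    show "0 \<le> (C + norm c * K) * T" using C0 K1 T by simp
    fix x y :: real assume xy: "x \<in> {0..1}" "y \<in> {0..1}"
    have "T * x \<in> {0..T}" "T * y \<in> {0..T}" using xy T by (auto simp: mult_le_cancel_left1)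
    then have "dist (\<gamma>' (T * x)) (\<gamma>' (T * y)) \<le> (C + norm c * K) * dist (T * x) (T * y)"
      using lip' by (simp add: lipschitz_on_def)
    also have "dist (T * x) (T * y) = T * dist x y" using T
      by (simp add: dist_real_def right_diff_distrib[symmetric] abs_mult)
    finally show "dist (\<gamma>'' x) (\<gamma>'' y) \<le> (C + norm c * K) * T * dist x y"
      by (simp add: \<gamma>''_def mult.assoc)
  qed
  have "cont_along a \<gamma>'' 1"
  proof -
    have "lipschitz_path \<gamma>'' 1" using lip'' by (auto simp: lipschitz_path_def)
    moreover have "\<gamma>'' 0 = 0" using g'0 by (simp add: \<gamma>''_def)
    moreover have "path_len \<gamma>'' 0 1 < L"
      using path_len_reparam[OF lip' T] len' unfolding g''eq by linarith
    moreover have "\<gamma>'' ` {0<..1} \<subseteq> - F"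
    proof
      fix w assume "w \<in> \<gamma>'' ` {0<..1}"
      then obtain s where s: "s \<in> {0<..1}" "w = \<gamma>' (T * s)" by (auto simp: \<gamma>''_def)
      then have "T * s \<in> {0<..T}" using T by (auto simp: mult_le_cancel_left1)
      then show "w \<in> - F" using avoid' s by auto
    qed
    ultimately show ?thesis using hypF by blast
  qed
  then have "cont_along a \<gamma>' T" using cont_along_reparam[of a \<gamma>' T] T unfolding g''eq by blast
  then obtain hh q where hq: "cfam a \<gamma>' T hh q" using cont_along_cfam by blast
  have shq: "sfam \<gamma>' 0 T hh q" and hinit: "\<exists>e>0. \<forall>z\<in>ball 0 e. hh 0 z = psum a z"
    using hq by (auto simp: cfam_def)
  have shq2: "sfam \<gamma>' 0 T2 hh q" using sfam_sub[OF shq] TT by auto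
  have cont2': "continuous_on {0..T2} \<gamma>'" using cont' TT by (auto intro: continuous_on_subset)
  have "\<forall>t\<in>{0..T2}. norm (\<gamma>' t - \<gamma> t) < \<rho>"
  proof
    fix t assume "t \<in> {0..T2}"
    then have "norm (\<gamma>' t - \<gamma> t) \<le> norm c * T" using close by auto
    then show "norm (\<gamma>' t - \<gamma> t) < \<rho>" using cT(1) by linarith
  qed
  then obtain g q' where gq: "sfam \<gamma>' 0 T2 g q'" and gf: "\<forall>t\<in>{0..T2}. \<exists>\<eta>>0. \<forall>z\<in>ball (\<gamma> t) \<eta>. g t z = f t z"
    using tubeP[OF cont2'] by blast
  obtain e1 where e1: "e1 > 0" "\<forall>z\<in>ball 0 e1. hh 0 z = psum a z" using hinit by blast
  obtain e2 where e2: "e2 > 0" "\<forall>z\<in>ball 0 e2. f 0 z = psum a z" using finit by blast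
  have "0 \<in> {0..T2}" using TT by auto
  then obtain e3 where e3: "e3 > 0" "\<forall>z\<in>ball (\<gamma> 0) e3. g 0 z = f 0 z" using gf by blast
  have agree0: "\<forall>z\<in>ball (\<gamma>' 0) (min e1 (min e2 e3)). hh 0 z = g 0 z"
    using e1 e2 e3 g0 g'0 by auto
  have T2in: "T2 \<in> {0..T2}" using TT by auto
  have hg: "\<forall>z\<in>ball (\<gamma>' T2) (min (q T2) (q' T2)). hh T2 z = g T2 z"
    using sfam_unique[OF shq2 gq _ _ agree0 T2in] TT e1 e2 e3 by auto
  obtain e4 where e4: "e4 > 0" "\<forall>z\<in>ball (\<gamma> T2) e4. g T2 z = f T2 z" using gf T2in by blast
  have qpos: "q T2 > 0" "q' T2 > 0"
    using shq2 gq T2in unfolding sfam_def by blast+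
  define \<eta>' where "\<eta>' = min e4 (min (q T2) (q' T2))"
  have \<eta>': "\<eta>' > 0" using e4 qpos by (simp add: \<eta>'_def)
  have fh: "\<forall>z\<in>ball (\<gamma> T2) \<eta>'. f T2 z = hh T2 z"
    using e4 hg g'T2[of T2] by (auto simp: \<eta>'_def)
  have sh: "sfam \<gamma> T2 T hh q"
    using sfam_cong[OF sfam_sub[OF shq, of T2 T]] g'T2 TT by auto
  have glued: "sfam \<gamma> 0 T (\<lambda>t. if t \<le> T2 then f t else hh t)
           (\<lambda>t. if t < T2 then r t else if t = T2 then min (r T2) (q T2) else q t)"
    by (rule sfam_glue[OF sf sh _ _ cont \<eta>' fh]) (use TT in auto)
  have "cfam a \<gamma> T (\<lambda>t. if t \<le> T2 then f t else hh t)
           (\<lambda>t. if t < T2 then r t else if t = T2 then min (r T2) (q T2) else q t)"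
    unfolding cfam_def using glued finit TT by simp
  then have "cont_along a \<gamma> T" using cont_along_cfam by blast
  then show False using nc by simp
qed

definition Omg :: "(nat \<Rightarrow> complex) \<Rightarrow> real \<Rightarrow> complex set" where
  "Omg a l = {\<omega>. sing_reach a l \<omega>}"

lemma allowed_cont:
  assumes germ: "conv_germ a" and al: "allowed (Omg a) \<gamma> T"
  shows "cont_along a \<gamma> T"
proof (rule ccontr)
  assume ncT: "\<not> cont_along a \<gamma> T"
  have T0: "T \<ge> 0" and g0: "\<gamma> 0 = 0" and M: "\<forall>t\<in>{0..T}. (path_len \<gamma> 0 t, \<gamma> t) \<in> M_dfs (Omg a)"
    using al by (auto simp: allowed_def)
  obtain C where lip: "C-lipschitz_on {0..T} \<gamma>" using al by (auto simp: allowed_def lipschitz_path_def)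
  have cont: "continuous_on {0..T} \<gamma>" using lip by (rule lipschitz_on_continuous_on)
  define A where "A = {t\<in>{0..T}. \<not> cont_along a \<gamma> t}"
  have TA: "T \<in> A" using ncT T0 by (simp add: A_def)
  have bdd: "bdd_below A" unfolding A_def by (rule bdd_belowI[of _ 0]) auto
  define \<tau> where "\<tau> = Inf A"
  have tau0: "\<tau> \<ge> 0" unfolding \<tau>_def using TA by (intro cInf_greatest) (auto simp: A_def)
  have tauT: "\<tau> \<le> T" unfolding \<tau>_def using TA bdd by (rule cInf_lower)
  have before: "cont_along a \<gamma> t" if "t \<in> {0..<\<tau>}" for t
  proof (rule ccontr)
    assume "\<not> cont_along a \<gamma> t"
    then have "t \<in> A" using that tauT by (auto simp: A_def)
    then have "\<tau> \<le> t" unfolding \<tau>_def using bdd by (rule cInf_lower)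
    then show False using that by auto
  qed
  show False
  proof (cases "cont_along a \<gamma> \<tau>")
    case False
    have lipt: "C-lipschitz_on {0..\<tau>} \<gamma>" using lipschitz_on_subset[OF lip, of "{0..\<tau>}"] tauT by auto
    have "sing_reach a (path_len \<gamma> 0 \<tau>) (\<gamma> \<tau>)"
      unfolding sing_reach_def using lipt tau0 g0 before False by blast
    then have "\<gamma> \<tau> \<in> Omg a (path_len \<gamma> 0 \<tau>)" by (simp add: Omg_def)
    moreover have "path_len \<gamma> 0 \<tau> \<ge> 0" using path_len_nonneg[OF lipt tau0] .
    ultimately have "(path_len \<gamma> 0 \<tau>, \<gamma> \<tau>) \<in> S_dfs (Omg a)" by (simp add: S_dfs_def)
    then have "(path_len \<gamma> 0 \<tau>, \<gamma> \<tau>) \<in> closure (S_dfs (Omg a))" using closure_subset by blast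
    moreover have "(path_len \<gamma> 0 \<tau>, \<gamma> \<tau>) \<in> M_dfs (Omg a)" using M tau0 tauT by auto
    ultimately show False by (simp add: M_dfs_def)
  next
    case True
    obtain \<epsilon> where \<epsilon>: "\<epsilon> > 0" "\<forall>t. \<tau> \<le> t \<and> t \<le> T \<and> t < \<tau> + \<epsilon> \<longrightarrow> cont_along a \<gamma> t"
      using cont_along_extend[OF True tau0 tauT cont] by blast
    have "\<tau> + \<epsilon> \<le> Inf A"
    proof (rule cInf_greatest)
      show "A \<noteq> {}" using TA by blast
      fix t assume t: "t \<in> A"
      then have "\<tau> \<le> t" unfolding \<tau>_def using bdd by (rule cInf_lower)
      moreover have "t \<le> T" "\<not> cont_along a \<gamma> t" using t by (auto simp: A_def)
      ultimately show "\<tau> + \<epsilon> \<le> t" using \<epsilon> by force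
    qed
    then show False using \<epsilon> by (simp add: \<tau>_def)
  qed
qed

lemma forward:
  assumes ec: "endlessly_continuable a"
  shows "dfs (Omg a) \<and> omega_continuable (Omg a) a"
proof -
  have germ: "conv_germ a" using ec by (simp add: endlessly_continuable_def)
  have "\<forall>L. \<exists>F. L > 0 \<longrightarrow> finite F \<and> (\<forall>\<gamma>. lipschitz_path \<gamma> 1 \<and> \<gamma> 0 = 0 \<and> path_len \<gamma> 0 1 < L \<and>
              \<gamma> ` {0<..1} \<subseteq> - F \<longrightarrow> cont_along a \<gamma> 1)"
    using ec unfolding endlessly_continuable_def by blast
  then obtain Ff where Ff: "\<And>L. L > 0 \<Longrightarrow> finite (Ff L) \<and> (\<forall>\<gamma>. lipschitz_path \<gamma> 1 \<and> \<gamma> 0 = 0 \<and> path_len \<gamma> 0 1 < L \<and>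
              \<gamma> ` {0<..1} \<subseteq> - Ff L \<longrightarrow> cont_along a \<gamma> 1)"
    by metis
  have fin: "finite (Omg a L)" if "L \<ge> 0" for L
  proof (rule finite_subset)
    have pos: "L + 1 > 0" using that by simp
    show "Omg a L \<subseteq> Ff (L + 1)"
    proof
      fix \<omega> assume "\<omega> \<in> Omg a L"
      then have "sing_reach a L \<omega>" by (simp add: Omg_def)
      then show "\<omega> \<in> Ff (L + 1)"
        using sing_in_F[OF germ _ _ _, of "Ff (L + 1)" "L + 1" L \<omega>] Ff[OF pos] by simp
    qed
    show "finite (Ff (L + 1))" using Ff[OF pos] by blast
  qed
  have mono: "\<forall>L1 L2. 0 \<le> L1 \<and> L1 \<le> L2 \<longrightarrow> Omg a L1 \<subseteq> Omg a L2"
  proof (intro allI impI subsetI)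
    fix L1 L2 \<omega> assume L: "0 \<le> L1 \<and> L1 \<le> L2" and "\<omega> \<in> Omg a L1"
    then obtain \<gamma> T C where H: "C-lipschitz_on {0..T} \<gamma> \<and> 0 \<le> T \<and> \<gamma> 0 = 0 \<and> \<gamma> T = \<omega> \<and>
      path_len \<gamma> 0 T \<le> L1 \<and> (\<forall>t\<in>{0..<T}. cont_along a \<gamma> t) \<and> \<not> cont_along a \<gamma> T"
      by (auto simp: Omg_def sing_reach_def)
    then have "path_len \<gamma> 0 T \<le> L2" using L by linarith
    then show "\<omega> \<in> Omg a L2" unfolding Omg_def sing_reach_def mem_Collect_eq
      using H by blast
  qed
  obtain \<rho> where \<rho>: "\<rho> > 0" "ereal \<rho> \<le> conv_radius a" using conv_germ_rho germ by blast
  have empty: "Omg a (\<rho> / 2) = {}"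
  proof (rule ccontr)
    assume "Omg a (\<rho> / 2) \<noteq> {}"
    then obtain \<omega> where "sing_reach a (\<rho> / 2) \<omega>" by (auto simp: Omg_def)
    then obtain \<gamma> T C where lip: "C-lipschitz_on {0..T} \<gamma>" and T0: "0 \<le> T" and g0: "\<gamma> 0 = 0"
      and len: "path_len \<gamma> 0 T \<le> \<rho> / 2" and nc: "\<not> cont_along a \<gamma> T"
      unfolding sing_reach_def by blast
    have cont: "continuous_on {0..T} \<gamma>" using lip by (rule lipschitz_on_continuous_on)
    have "\<gamma> ` {0..T} \<subseteq> ball 0 \<rho>"
    proof
      fix w assume "w \<in> \<gamma> ` {0..T}"
      then obtain t where t: "t \<in> {0..T}" "w = \<gamma> t" by auto
      have "norm (\<gamma> t - \<gamma> 0) \<le> path_len \<gamma> 0 T" using dist_le_len[OF lip] t by auto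
      then show "w \<in> ball 0 \<rho>" using t len g0 \<rho> by simp
    qed
    then have "cont_along a \<gamma> T"
      using cont_along_global[OF cont g0 powser_holo[OF \<rho>(2)] open_ball _ \<rho>(1)] by blast
    then show False using nc by simp
  qed
  have "dfs (Omg a)" unfolding dfs_def
    using fin mono empty \<rho> by (intro conjI allI impI exI[of _ "\<rho> / 2"]) auto
  moreover have "omega_continuable (Omg a) a"
    unfolding omega_continuable_def using germ allowed_cont by blast
  ultimately show ?thesis by blast
qed

lemma backward:
  assumes D: "dfs \<Omega>" and oc: "omega_continuable \<Omega> a"
  shows "endlessly_continuable a"
proof -
  have germ: "conv_germ a" using oc by (simp add: omega_continuable_def)
  have finO: "\<forall>L\<ge>0. finite (\<Omega> L)" and monoO: "\<forall>L1 L2. 0 \<le> L1 \<and> L1 \<le> L2 \<longrightarrow> \<Omega> L1 \<subseteq> \<Omega> L2"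
    using D by (auto simp: dfs_def)
  obtain \<delta> where \<delta>: "\<delta> > 0" "\<Omega> \<delta> = {}" using D by (auto simp: dfs_def)
  have main: "cont_along a \<gamma> 1" if L: "L > 0" and lp: "lipschitz_path \<gamma> 1" and g0: "\<gamma> 0 = 0"
      and len: "path_len \<gamma> 0 1 < L" and av: "\<gamma> ` {0<..1} \<subseteq> - \<Omega> L" for L \<gamma>
  proof -
    obtain C where lip: "C-lipschitz_on {0..1} \<gamma>" using lp by (auto simp: lipschitz_path_def)
    define Z where "Z = ({\<delta>..} \<times> UNIV) \<inter> (({L..} \<times> UNIV) \<union> (UNIV \<times> \<Omega> L))"
    have "closed Z" unfolding Z_def
      using finO L by (intro closed_Int closed_Un closed_Times closed_atLeast closed_UNIV finite_imp_closed) auto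
    moreover have "S_dfs \<Omega> \<subseteq> Z"
    proof
      fix p assume "p \<in> S_dfs \<Omega>"
      then obtain l w where p: "p = (l, w)" "l \<ge> 0" "w \<in> \<Omega> l" by (auto simp: S_dfs_def)
      have "l \<ge> \<delta>"
      proof (rule ccontr)
        assume "\<not> l \<ge> \<delta>"
        then have "\<Omega> l \<subseteq> \<Omega> \<delta>" using monoO p by auto
        then show False using p \<delta> by auto
      qed
      moreover have "l \<ge> L \<or> w \<in> \<Omega> L"
      proof (cases "l \<ge> L")
        case False
        then have "\<Omega> l \<subseteq> \<Omega> L" using monoO p by auto
        then show ?thesis using p by auto
      qed simp
      ultimately show "p \<in> Z" using p by (auto simp: Z_def)
    qed
    ultimately have cl: "closure (S_dfs \<Omega>) \<subseteq> Z" by (rule closure_minimal[rotated])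
    have "allowed \<Omega> \<gamma> 1" unfolding allowed_def
    proof (intro conjI ballI)
      show "(0::real) \<le> 1" by simp
      show "lipschitz_path \<gamma> 1" using lp .
      show "\<gamma> 0 = 0" using g0 .
      fix t :: real assume t: "t \<in> {0..1}"
      have lt: "path_len \<gamma> 0 t < L" using path_len_mono[OF lip, of t] t len by auto
      have "(path_len \<gamma> 0 t, \<gamma> t) \<notin> Z"
      proof (cases "t = 0")
        case True
        have "path_len \<gamma> 0 0 \<le> 0"
        proof (rule path_len_le)
          fix ps assume "ps \<in> PS 0 0"
          moreover have "C-lipschitz_on {0..0} \<gamma>" using lipschitz_on_subset[OF lip, of "{0..0}"] by auto
          ultimately show "psums \<gamma> ps \<le> 0" using psums_lip[of C 0 0 \<gamma> ps] by simp
        qed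
        then show ?thesis using True \<delta> by (auto simp: Z_def)
      next
        case False
        then have "t \<in> {0<..1}" using t by auto
        then have "\<gamma> t \<in> \<gamma> ` {0<..1}" by (rule imageI)
        then have "\<gamma> t \<notin> \<Omega> L" using av by blast
        then show ?thesis using lt by (auto simp: Z_def)
      qed
      then show "(path_len \<gamma> 0 t, \<gamma> t) \<in> M_dfs \<Omega>" using cl by (auto simp: M_dfs_def)
    qed
    then show ?thesis using oc by (auto simp: omega_continuable_def)
  qed
  show ?thesis unfolding endlessly_continuable_def
  proof (intro conjI allI impI)
    show "conv_germ a" using germ .
    fix L :: real assume L: "L > 0"
    show "\<exists>F. finite F \<and> (\<forall>\<gamma>. lipschitz_path \<gamma> 1 \<and> \<gamma> 0 = 0 \<and> path_len \<gamma> 0 1 < L \<and> \<gamma> ` {0<..1} \<subseteq> - F \<longrightarrow> cont_along a \<gamma> 1)"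
      using main[OF L] finO L by (intro exI[of _ "\<Omega> L"]) auto
  qed
qed

theorem theorem2p13:
  shows "(\<forall>a. endlessly_continuable a \<longleftrightarrow> (\<exists>\<Omega>. dfs \<Omega> \<and> omega_continuable \<Omega> a)) \<and>
         (\<forall>\<phi>. resurgent \<phi> \<longleftrightarrow> (\<exists>\<Omega>. dfs \<Omega> \<and> omega_resurgent \<Omega> \<phi>))"
proof -
  have A: "\<forall>a. endlessly_continuable a \<longleftrightarrow> (\<exists>\<Omega>. dfs \<Omega> \<and> omega_continuable \<Omega> a)"
    using forward backward by blast
  then show ?thesis by (simp add: resurgent_def omega_resurgent_def)
qed

end
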